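(* Let $m$ be odd, $\Omega\subseteq\mathbb R^m$ open, and $f\in\mathcal C^4(\Omega;\mathbb R_{0,m})$. Suppose $f$ is harmonic in $\Omega$ (respectively, inframonogenic in $\Omega$). Then $f$ is also inframonogenic (respectively, harmonic) in $\Omega$ if and only if any one of the following holds: (i) $\partial_{\underline x}^3\big(f(\underline x)\underline x\big)=0$ in $\Omega$; (ii) $\big(\underline xf(\underline x)\big)\partial_{\underline x}^3=0$ in $\Omega$; (iii) $\Delta_{\underline x}^2\big(\underline xf(\underline x)\underline x\big)=0$ in $\Omega$.
   Context: $\mathbb R_{0,m}$ is the $2^m$-dimensional real Clifford algebra generated by the orthonormal basis $e_1,\dots,e_m$ of $\mathbb R^m$ with relations $e_je_k+e_ke_j=-2\delta_{jk}$. A point of $\mathbb R^m$ is identified with $\underline x=\sum_j x_je_j$. The Dirac operator $\partial_{\underline x}=\sum_j e_j\partial_{x_j}$ acts from the left, $\partial_{\underline x}f=\sum_j e_j\partial_{x_j}f$, or from the right, $f\partial_{\underline x}=\sum_j(\partial_{x_j}f)e_j$; powers denote iterated application on the same side. $f\in\mathcal C^2$ is inframonogenic if $\partial_{\underline x}f\partial_{\underline x}=\sum_{i,j}e_i(\partial_{x_i}\partial_{x_j}f)e_j=0$. $\Delta_{\underline x}=\sum_j\partial_{x_j}^2$. *)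

theory Defs
  imports "HOL-Analysis.Analysis" "HOL-Library.Function_Algebras"
begin


text \<open>The Clifford algebra R_{0,m}, m = CARD('n). An element is a real coefficient
  function on basis blades e_A, A a subset of the (linearly ordered, finite) index
  type 'n; e_A = e_a1 ... e_ak with a1 < ... < ak.\<close>

type_synonym 'n clifford = "'n set \<Rightarrow> real"

definition blade_sign :: "'n::{finite,linorder} set \<Rightarrow> 'n::{finite,linorder} set \<Rightarrow> real" where
  "blade_sign A B = (-1) ^ (card {(a, b). a \<in> A \<and> b \<in> B \<and> b < a} + card (A \<inter> B))"

definition cl_mult :: "'n::{finite,linorder} clifford \<Rightarrow> 'n::{finite,linorder} clifford \<Rightarrow> 'n::{finite,linorder} clifford"
  (infixl "\<odot>" 70) where
  "a \<odot> b = (\<lambda>C. \<Sum>A\<in>UNIV. \<Sum>B\<in>UNIV.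
      if A \<union> B - A \<inter> B = C then blade_sign A B * a A * b B else 0)"

definition cl_e :: "'n::{finite,linorder} \<Rightarrow> 'n::{finite,linorder} clifford" where
  "cl_e j = (\<lambda>A. if A = {j} then 1 else 0)"

definition cl_vec :: "real ^ 'n::{finite,linorder} \<Rightarrow> 'n::{finite,linorder} clifford" where
  "cl_vec x = (\<Sum>j\<in>UNIV. (\<lambda>A. x $ j * cl_e j A))"

definition rpartial :: "'n::{finite,linorder} \<Rightarrow> (real ^ 'n::{finite,linorder} \<Rightarrow> real) \<Rightarrow> real ^ 'n::{finite,linorder} \<Rightarrow> real" where
  "rpartial j g x = deriv (\<lambda>t. g (x + t *\<^sub>R axis j 1)) 0"

definition cpartial :: "'n::{finite,linorder} \<Rightarrow> (real ^ 'n::{finite,linorder} \<Rightarrow> 'n::{finite,linorder} clifford) \<Rightarrow> real ^ 'n::{finite,linorder} \<Rightarrow> 'n::{finite,linorder} clifford" where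
  "cpartial j f x = (\<lambda>A. rpartial j (\<lambda>y. f y A) x)"

fun Ck_real :: "nat \<Rightarrow> (real ^ 'n::{finite,linorder}) set \<Rightarrow> (real ^ 'n::{finite,linorder} \<Rightarrow> real) \<Rightarrow> bool" where
  "Ck_real 0 \<Omega> g = continuous_on \<Omega> g"
| "Ck_real (Suc k) \<Omega> g = (continuous_on \<Omega> g \<and>
      (\<forall>x\<in>\<Omega>. \<forall>j. (\<lambda>t. g (x + t *\<^sub>R axis j 1)) differentiable (at 0)) \<and>
      (\<forall>j. Ck_real k \<Omega> (rpartial j g)))"

definition Ck :: "nat \<Rightarrow> (real ^ 'n::{finite,linorder}) set \<Rightarrow> (real ^ 'n::{finite,linorder} \<Rightarrow> 'n::{finite,linorder} clifford) \<Rightarrow> bool" where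
  "Ck k \<Omega> f = (\<forall>A. Ck_real k \<Omega> (\<lambda>x. f x A))"

definition dirac_l :: "(real ^ 'n::{finite,linorder} \<Rightarrow> 'n::{finite,linorder} clifford) \<Rightarrow> real ^ 'n::{finite,linorder} \<Rightarrow> 'n::{finite,linorder} clifford" where
  "dirac_l f x = (\<Sum>j\<in>UNIV. cl_e j \<odot> cpartial j f x)"

definition dirac_r :: "(real ^ 'n::{finite,linorder} \<Rightarrow> 'n::{finite,linorder} clifford) \<Rightarrow> real ^ 'n::{finite,linorder} \<Rightarrow> 'n::{finite,linorder} clifford" where
  "dirac_r f x = (\<Sum>j\<in>UNIV. cpartial j f x \<odot> cl_e j)"

definition laplace :: "(real ^ 'n::{finite,linorder} \<Rightarrow> 'n::{finite,linorder} clifford) \<Rightarrow> real ^ 'n::{finite,linorder} \<Rightarrow> 'n::{finite,linorder} clifford" where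
  "laplace f x = (\<Sum>j\<in>UNIV. cpartial j (cpartial j f) x)"

definition harmonic_on :: "(real ^ 'n::{finite,linorder}) set \<Rightarrow> (real ^ 'n::{finite,linorder} \<Rightarrow> 'n::{finite,linorder} clifford) \<Rightarrow> bool" where
  "harmonic_on \<Omega> f = (\<forall>x\<in>\<Omega>. laplace f x = 0)"

definition inframonogenic_on :: "(real ^ 'n::{finite,linorder}) set \<Rightarrow> (real ^ 'n::{finite,linorder} \<Rightarrow> 'n::{finite,linorder} clifford) \<Rightarrow> bool" where
  "inframonogenic_on \<Omega> f =
     (\<forall>x\<in>\<Omega>. (\<Sum>i\<in>UNIV. \<Sum>j\<in>UNIV. cl_e i \<odot> cpartial i (cpartial j f) x \<odot> cl_e j) = 0)"


end

theory Submission
  imports Defs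
begin


definition tg :: "'n::{finite,linorder} \<Rightarrow> 'n set \<Rightarrow> 'n set" where
  "tg j C = (if j \<in> C then C - {j} else insert j C)"

lemma tg_tg[simp]: "tg j (tg j C) = C"
  unfolding tg_def by auto

lemma tg_comm: "tg i (tg j C) = tg j (tg i C)"
  unfolding tg_def by auto

lemma symdiff_single_left: "({j} \<union> B - {j} \<inter> B = C) \<longleftrightarrow> B = tg j C"
  unfolding tg_def by auto

lemma symdiff_single_right: "(A \<union> {j} - A \<inter> {j} = C) \<longleftrightarrow> A = tg j C"
  unfolding tg_def by auto

lemma sL_explicit: "blade_sign {j} B = (-1)^card {b\<in>B. b<j} * (if j\<in>B then -1 else 1)"
proof -
  have "{(a, b). a \<in> {j} \<and> b \<in> B \<and> b < a} = Pair j ` {b\<in>B. b<j}" by auto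
  hence "card {(a, b). a \<in> {j} \<and> b \<in> B \<and> b < a} = card {b\<in>B. b<j}"
    by (simp add: card_image inj_on_def)
  moreover have "card ({j} \<inter> B) = (if j\<in>B then 1 else 0)" by auto
  ultimately show ?thesis unfolding blade_sign_def by (simp add: power_add)
qed

lemma sR_explicit: "blade_sign B {j} = (-1)^card {b\<in>B. j<b} * (if j\<in>B then -1 else 1)"
proof -
  have "{(a, b). a \<in> B \<and> b \<in> {j} \<and> b < a} = (\<lambda>a. (a,j)) ` {b\<in>B. j<b}" by auto
  hence "card {(a, b). a \<in> B \<and> b \<in> {j} \<and> b < a} = card {b\<in>B. j<b}"
    by (simp add: card_image inj_on_def)
  moreover have "card (B \<inter> {j}) = (if j\<in>B then 1 else 0)" by auto
  ultimately show ?thesis unfolding blade_sign_def by (simp add: power_add)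
qed

lemma pw_toggle:
  fixes B :: "'a::finite set"
  shows "(-1::real)^card {b\<in>(if k \<in> B then B - {k} else insert k B). P b} =
     (if P k then -1 else 1) * (-1)^card {b\<in>B. P b}"
proof (cases "P k")
  case True
  show ?thesis
  proof (cases "k \<in> B")
    case True
    have "{b\<in>B - {k}. P b} = {b\<in>B. P b} - {k}" by auto
    moreover have "k \<in> {b\<in>B. P b}" using True \<open>P k\<close> by auto
    ultimately have "card {b\<in>B - {k}. P b} = card {b\<in>B. P b} - 1" by simp
    moreover have "card {b\<in>B. P b} \<ge> 1"
      using \<open>k \<in> {b\<in>B. P b}\<close> by (metis One_nat_def Suc_leI card_gt_0_iff empty_iff finite)
    ultimately show ?thesis using True \<open>P k\<close>
      by (cases "card {b\<in>B. P b}") auto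
  next
    case False
    have "{b\<in>insert k B. P b} = insert k {b\<in>B. P b}" using \<open>P k\<close> by auto
    thus ?thesis using False \<open>P k\<close> by simp
  qed
next
  case False
  hence "{b\<in>(if k \<in> B then B - {k} else insert k B). P b} = {b\<in>B. P b}" by auto
  thus ?thesis using False by simp
qed

lemma sL_tg: "blade_sign {j} (tg k B) =
   (if k < j then -1 else 1) * (if k = j then -1 else 1) * blade_sign {j} B"
  unfolding sL_explicit tg_def
  using pw_toggle[of k B "\<lambda>b. b < j"] by (auto simp: tg_def)

lemma sR_tg: "blade_sign (tg k B) {j} =
   (if j < k then -1 else 1) * (if k = j then -1 else 1) * blade_sign B {j}"
  unfolding sR_explicit tg_def
  using pw_toggle[of k B "\<lambda>b. j < b"] by (auto simp: tg_def)


lemma fun_sum_apply: "(\<Sum>k\<in>S. u k) x = (\<Sum>k\<in>S. u k x)"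
  by (induction S rule: infinite_finite_induct) auto

definition sc :: "real \<Rightarrow> 'n::{finite,linorder} clifford \<Rightarrow> 'n clifford" where
  "sc r a = (\<lambda>A. r * a A)"

lemma sc_apply[simp]: "sc r a A = r * a A" by (simp add: sc_def)

lemma L_apply: "(cl_e j \<odot> a) C = blade_sign {j} (tg j C) * a (tg j C)"
proof -
  have "(cl_e j \<odot> a) C = (\<Sum>A\<in>UNIV. \<Sum>B\<in>UNIV. if B = tg j C then
           (if A = {j} then blade_sign {j} B * a B else 0) else 0)"
    unfolding cl_mult_def cl_e_def
  proof (intro sum.cong refl)
    fix A B :: "'a set"
    show "(if A \<union> B - A \<inter> B = C then blade_sign A B * (if A = {j} then 1 else 0) * a B else 0) =
       (if B = tg j C then if A = {j} then blade_sign {j} B * a B else 0 else 0)"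
    proof (cases "A = {j}")
      case True
      then show ?thesis using symdiff_single_left[of j B C] by simp
    qed simp
  qed
  also have "\<dots> = blade_sign {j} (tg j C) * a (tg j C)"
    by (simp add: sum.delta)
  finally show ?thesis .
qed

lemma R_apply: "(a \<odot> cl_e j) C = blade_sign (tg j C) {j} * a (tg j C)"
proof -
  have "(a \<odot> cl_e j) C = (\<Sum>A\<in>UNIV. \<Sum>B\<in>UNIV. if B = {j} then
           (if A = tg j C then blade_sign A {j} * a A else 0) else 0)"
    unfolding cl_mult_def cl_e_def
  proof (intro sum.cong refl)
    fix A B :: "'a set"
    show "(if A \<union> B - A \<inter> B = C then blade_sign A B * a A * (if B = {j} then 1 else 0) else 0) =
       (if B = {j} then if A = tg j C then blade_sign A {j} * a A else 0 else 0)"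
    proof (cases "B = {j}")
      case True
      then show ?thesis using symdiff_single_right[of A j C] by simp
    qed simp
  qed
  also have "\<dots> = blade_sign (tg j C) {j} * a (tg j C)"
    by (simp add: sum.delta)
  finally show ?thesis .
qed

lemma bs_sq[simp]: "blade_sign A B * blade_sign A B = 1"
  unfolding blade_sign_def by (simp add: power_mult_distrib[symmetric] flip: power_add mult_2)

lemma bs_sq2[simp]: "blade_sign A B * (blade_sign A B * z) = z"
  by (simp add: mult.assoc[symmetric])

lemma LL: "cl_e i \<odot> (cl_e j \<odot> a) + cl_e j \<odot> (cl_e i \<odot> a) =
    (if i = j then sc (-2) a else 0)"
proof (rule ext)
  fix C
  have c: "tg j (tg i C) = tg i (tg j C)" by (rule tg_comm)
  show "(cl_e i \<odot> (cl_e j \<odot> a) + cl_e j \<odot> (cl_e i \<odot> a)) C = (if i = j then sc (-2) a else 0) C"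
    by (cases i j rule: linorder_cases) (auto simp: L_apply sL_tg c algebra_simps)
qed

lemma RR: "(a \<odot> cl_e j) \<odot> cl_e i + (a \<odot> cl_e i) \<odot> cl_e j =
    (if i = j then sc (-2) a else 0)"
proof (rule ext)
  fix C
  have c: "tg j (tg i C) = tg i (tg j C)" by (rule tg_comm)
  show "((a \<odot> cl_e j) \<odot> cl_e i + (a \<odot> cl_e i) \<odot> cl_e j) C = (if i = j then sc (-2) a else 0) C"
    by (cases i j rule: linorder_cases) (auto simp: R_apply sR_tg c algebra_simps)
qed

lemma LR: "(cl_e i \<odot> a) \<odot> cl_e j = cl_e i \<odot> (a \<odot> cl_e j)"
proof (rule ext)
  fix C
  have c: "tg j (tg i C) = tg i (tg j C)" by (rule tg_comm)
  show "((cl_e i \<odot> a) \<odot> cl_e j) C = (cl_e i \<odot> (a \<odot> cl_e j)) C"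
    by (cases i j rule: linorder_cases) (auto simp: R_apply L_apply sR_tg sL_tg c algebra_simps)
qed


definition kk :: "'n::{finite,linorder} set \<Rightarrow> 'n set \<Rightarrow> 'n set \<Rightarrow> real" where
  "kk A B C = (if A \<union> B - A \<inter> B = C then blade_sign A B else 0)"

lemma cl_mult_alt: "(a \<odot> b) C = (\<Sum>A\<in>UNIV. \<Sum>B\<in>UNIV. a A * b B * kk A B C)"
  unfolding cl_mult_def kk_def by (intro sum.cong refl) auto

lemma mult_add_left: "(u + v) \<odot> b = u \<odot> b + v \<odot> b"
  by (rule ext) (simp add: cl_mult_alt algebra_simps sum.distrib)

lemma mult_add_right: "b \<odot> (u + v) = b \<odot> u + b \<odot> v"
  by (rule ext) (simp add: cl_mult_alt algebra_simps sum.distrib)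

lemma mult_zero_left[simp]: "0 \<odot> b = 0"
  by (rule ext) (simp add: cl_mult_alt)

lemma mult_zero_right[simp]: "b \<odot> 0 = 0"
  by (rule ext) (simp add: cl_mult_alt)

lemma mult_sc_left: "sc r u \<odot> b = sc r (u \<odot> b)"
  by (rule ext) (simp add: cl_mult_alt sum_distrib_left mult.assoc)

lemma mult_sc_right: "b \<odot> sc r u = sc r (b \<odot> u)"
  by (rule ext) (simp add: cl_mult_alt sum_distrib_left algebra_simps)

lemma mult_minus_left: "(- u) \<odot> b = - (u \<odot> b)"
  by (rule ext) (simp add: cl_mult_alt sum_negf)

lemma mult_minus_right: "b \<odot> (- u) = - (b \<odot> u)"
  by (rule ext) (simp add: cl_mult_alt sum_negf)

lemma mult_sum_left: "(\<Sum>k\<in>S. u k) \<odot> b = (\<Sum>k\<in>S. u k \<odot> b)"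
proof (induction S rule: infinite_finite_induct)
  case (insert x F) thus ?case by (metis mult_add_left sum.insert)
next
  case (infinite A) thus ?case by (metis sum.infinite mult_zero_left)
qed (simp only: sum.empty mult_zero_left)

lemma mult_sum_right: "b \<odot> (\<Sum>k\<in>S. u k) = (\<Sum>k\<in>S. b \<odot> u k)"
proof (induction S rule: infinite_finite_induct)
  case (insert x F) thus ?case by (metis mult_add_right sum.insert)
next
  case (infinite A) thus ?case by (metis sum.infinite mult_zero_right)
qed (simp only: sum.empty mult_zero_right)

lemma sc_add: "sc r (a + b) = sc r a + sc r b" by (rule ext) (simp add: algebra_simps)
lemma sc_zero[simp]: "sc r 0 = 0" by (rule ext) simp
lemma sc_sum: "sc r (\<Sum>k\<in>S. u k) = (\<Sum>k\<in>S. sc r (u k))"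
  by (rule ext) (simp add: fun_sum_apply sum_distrib_left)
lemma sc_sc: "sc r (sc s a) = sc (r * s) a" by (rule ext) simp
lemma sc_one[simp]: "sc 1 a = a" by (rule ext) simp
lemma sc_0[simp]: "sc 0 a = 0" by (rule ext) simp

definition Tm :: "'n::{finite,linorder} clifford \<Rightarrow> 'n clifford" where
  "Tm a = (\<Sum>j\<in>UNIV. cl_e j \<odot> a \<odot> cl_e j)"

lemma card_split:
  fixes C :: "'n::{finite,linorder} set"
  shows "card {b\<in>C. b<j} + card {b\<in>C. j<b} + (if j\<in>C then 1 else 0) = card C"
proof -
  have eq: "({b\<in>C. b<j} \<union> {b\<in>C. j<b}) \<union> (C \<inter> {j}) = C" by auto
  have "card (({b\<in>C. b<j} \<union> {b\<in>C. j<b}) \<union> (C \<inter> {j})) =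
        card ({b\<in>C. b<j} \<union> {b\<in>C. j<b}) + card (C \<inter> {j})"
    by (rule card_Un_disjoint) auto
  moreover have "card ({b\<in>C. b<j} \<union> {b\<in>C. j<b}) = card {b\<in>C. b<j} + card {b\<in>C. j<b}"
    by (rule card_Un_disjoint) auto
  moreover have "card (C \<inter> {j}) = (if j\<in>C then 1 else 0)" by auto
  ultimately show ?thesis unfolding eq by simp
qed

lemma sign_prod: "blade_sign C {j} * blade_sign {j} C = (-1)^card C * (if j\<in>C then -1 else 1)"
proof -
  have c: "card C = card {b\<in>C. b<j} + card {b\<in>C. j<b} + (if j\<in>C then 1 else 0)"
    using card_split[of C j] by simp
  have e: "(-1::real)^card C = (-1)^(card {b\<in>C. b<j} + card {b\<in>C. j<b}) * (if j\<in>C then -1 else 1)"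
    by (subst c) (simp add: power_add)
  show ?thesis unfolding sR_explicit sL_explicit e
    by (auto simp: power_add algebra_simps)
qed

lemma sum_ifC: "(\<Sum>j\<in>UNIV. if j\<in>C then -1 else (1::real)) = real CARD('n::{finite,linorder}) - 2 * real (card (C::'n set))"
proof -
  have "(\<Sum>j\<in>UNIV. if j\<in>C then -1 else (1::real)) = - real (card C) + real (card (UNIV - C))"
    by (simp add: sum.If_cases Int_absorb1 Compl_eq_Diff_UNIV)
  also have "card (UNIV - C) = CARD('n) - card C" by (metis card_Diff_subset finite subset_UNIV)
  finally show ?thesis using card_mono[of UNIV C] by (simp add: of_nat_diff)
qed

lemma T_apply: "Tm a C = (-1)^card C * (2 * real (card C) - real CARD('n::{finite,linorder})) * a (C::'n set)"
proof -
  have "Tm a C = (\<Sum>j\<in>UNIV. - ((-1)^card C * (if j\<in>C then -1 else 1)) * a C)"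
    unfolding Tm_def fun_sum_apply
  proof (intro sum.cong refl)
    fix j
    have "(cl_e j \<odot> a \<odot> cl_e j) C = blade_sign (tg j C) {j} * blade_sign {j} C * a C"
      by (simp add: R_apply L_apply)
    also have "\<dots> = - (blade_sign C {j} * blade_sign {j} C) * a C"
      by (simp add: sR_tg)
    finally show "(cl_e j \<odot> a \<odot> cl_e j) C = - ((-1)^card C * (if j\<in>C then -1 else 1)) * a C"
      by (simp add: sign_prod)
  qed
  also have "\<dots> = - ((-1)^card C * a C) * (\<Sum>j\<in>UNIV. if j\<in>C then -1 else (1::real))"
    by (subst sum_distrib_left) (intro sum.cong refl, simp)
  also have "\<dots> = (-1)^card C * (2 * real (card C) - real CARD('n)) * a C"
    by (simp add: sum_ifC algebra_simps)
  finally show ?thesis .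
qed

lemma T_zero_iff:
  assumes "odd CARD('n::{finite,linorder})"
  shows "Tm (a::'n clifford) = 0 \<longleftrightarrow> a = 0"
proof
  assume h: "Tm a = 0"
  show "a = 0"
  proof (rule ext)
    fix C :: "'n set"
    have "2 * card C \<noteq> CARD('n)" using assms by (metis dvd_triv_left)
    hence "real (2 * card C) \<noteq> real CARD('n)" by (metis of_nat_eq_iff)
    hence "2 * real (card C) - real CARD('n) \<noteq> 0" by simp
    moreover have "Tm a C = 0" using h by simp
    ultimately show "a C = 0 C" by (simp add: T_apply)
  qed
qed (simp add: Tm_def)


lemma axis_nth_gen: "axis j (1::real) $ i = (if i = j then 1 else 0)"
  by (simp add: axis_def)

lemma DERIV_differentiable: fixes f :: "real \<Rightarrow> real" shows "DERIV f x :> D \<Longrightarrow> f differentiable at x"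
  by (metis DERIV_deriv_iff_real_differentiable DERIV_imp_deriv)

lemma rp_DERIV:
  fixes g :: "real ^ 'n::{finite,linorder} \<Rightarrow> real"
  assumes "(\<lambda>t. g (x + t *\<^sub>R axis j 1)) differentiable (at 0)"
  shows "DERIV (\<lambda>t. g (x + t *\<^sub>R axis j (1::real))) 0 :> rpartial j g x"
  using assms unfolding rpartial_def by (simp add: DERIV_deriv_iff_real_differentiable)

lemma rp_eqI:
  fixes g :: "real ^ 'n::{finite,linorder} \<Rightarrow> real"
  assumes "DERIV (\<lambda>t. g (x + t *\<^sub>R axis j (1::real))) 0 :> D"
  shows "rpartial j g x = D"
  using assms unfolding rpartial_def by (rule DERIV_imp_deriv)

context
  fixes \<Omega> :: "(real ^ 'n::{finite,linorder}) set"
  assumes opn: "open \<Omega>"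
begin

lemma ev_line:
  assumes "x \<in> \<Omega>"
  shows "eventually (\<lambda>t. x + t *\<^sub>R axis j (1::real) \<in> \<Omega>) (nhds 0)"
proof -
  obtain e where e: "e > 0" "ball x e \<subseteq> \<Omega>" using opn assms by (meson open_contains_ball)
  show ?thesis unfolding eventually_nhds_metric
  proof (intro exI[of _ e] conjI allI impI)
    fix t :: real assume "dist t 0 < e"
    hence "dist x (x + t *\<^sub>R axis j 1) < e" by (simp add: dist_norm)
    thus "x + t *\<^sub>R axis j 1 \<in> \<Omega>" using e by auto
  qed (use e in auto)
qed

lemma rp_loc:
  fixes g h :: "real ^ 'n::{finite,linorder} \<Rightarrow> real"
  assumes "\<forall>y\<in>\<Omega>. g y = h y" "x \<in> \<Omega>"
  shows "rpartial j g x = rpartial j h x"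
proof -
  have "eventually (\<lambda>t. g (x + t *\<^sub>R axis j 1) = h (x + t *\<^sub>R axis j 1)) (nhds 0)"
    by (rule eventually_mono[OF ev_line[OF assms(2), of j]]) (use assms(1) in blast)
  thus ?thesis unfolding rpartial_def by (rule deriv_cong_ev) simp
qed

lemma diff_loc:
  fixes g h :: "real ^ 'n::{finite,linorder} \<Rightarrow> real"
  assumes "\<forall>y\<in>\<Omega>. g y = h y" "x \<in> \<Omega>"
    and "(\<lambda>t. g (x + t *\<^sub>R axis j 1)) differentiable (at 0)"
  shows "(\<lambda>t. h (x + t *\<^sub>R axis j 1)) differentiable (at 0)"
proof -
  have D: "DERIV (\<lambda>t. g (x + t *\<^sub>R axis j 1)) 0 :> rpartial j g x" by (rule rp_DERIV[OF assms(3)])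
  have ev: "eventually (\<lambda>t. g (x + t *\<^sub>R axis j 1) = h (x + t *\<^sub>R axis j 1)) (nhds 0)"
    by (rule eventually_mono[OF ev_line[OF assms(2), of j]]) (use assms(1) in blast)
  show ?thesis by (rule DERIV_differentiable[OF iffD1[OF DERIV_cong_ev[OF refl ev refl] D]])
qed

end

definition lnd :: "(real ^ 'n::{finite,linorder} \<Rightarrow> real) \<Rightarrow> real ^ 'n::{finite,linorder} \<Rightarrow> bool" where
  "lnd g x = (\<forall>j. (\<lambda>t. g (x + t *\<^sub>R axis j 1)) differentiable (at 0))"

lemma lnd_DERIV: "lnd g x \<Longrightarrow> DERIV (\<lambda>t. g (x + t *\<^sub>R axis j (1::real))) 0 :> rpartial j g x"
  unfolding lnd_def by (simp add: rp_DERIV)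

lemma lnd_add: assumes "lnd g x" "lnd h x" shows "lnd (\<lambda>y. g y + h y) x"
  unfolding lnd_def[of "\<lambda>y. g y + h y"]
proof
  fix j show "(\<lambda>t. g (x + t *\<^sub>R axis j 1) + h (x + t *\<^sub>R axis j 1)) differentiable at 0"
    by (rule DERIV_differentiable[OF DERIV_add[OF lnd_DERIV[OF assms(1)] lnd_DERIV[OF assms(2)]]])
qed

lemma rp_add: "lnd g x \<Longrightarrow> lnd h x \<Longrightarrow>
   rpartial j (\<lambda>y. g y + h y) x = rpartial j g x + rpartial j h x"
  by (rule rp_eqI, rule DERIV_add) (auto simp: lnd_DERIV)

lemma lnd_cmult: assumes "lnd g x" shows "lnd (\<lambda>y. c * g y) x"
  unfolding lnd_def[of "\<lambda>y. c * g y"]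
proof
  fix j show "(\<lambda>t. c * g (x + t *\<^sub>R axis j 1)) differentiable at 0"
    by (rule DERIV_differentiable[OF DERIV_cmult[OF lnd_DERIV[OF assms(1)]]])
qed

lemma rp_cmult: "lnd g x \<Longrightarrow> rpartial j (\<lambda>y. c * g y) x = c * rpartial j g x"
  by (rule rp_eqI, rule DERIV_cmult) (auto simp: lnd_DERIV)

lemma lnd_const: "lnd (\<lambda>y. c) x"
  unfolding lnd_def by simp

lemma rp_const: "rpartial j (\<lambda>y. c) x = 0"
  by (rule rp_eqI) simp

lemma lnd_sum: "finite S \<Longrightarrow> (\<And>k. k \<in> S \<Longrightarrow> lnd (g k) x) \<Longrightarrow> lnd (\<lambda>y. \<Sum>k\<in>S. g k y) x"
proof (induction S rule: finite_induct)
  case empty then show ?case by (simp add: lnd_const)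
next
  case (insert a F) then show ?case by (simp add: lnd_add)
qed

lemma rp_sum: "finite S \<Longrightarrow> (\<And>k. k \<in> S \<Longrightarrow> lnd (g k) x) \<Longrightarrow>
  rpartial j (\<lambda>y. \<Sum>k\<in>S. g k y) x = (\<Sum>k\<in>S. rpartial j (g k) x)"
  by (rule rp_eqI, rule DERIV_sum, rule lnd_DERIV) simp

lemma line_coord_DERIV: "DERIV (\<lambda>t. (x + t *\<^sub>R axis j 1) $ i) 0 :> (if i = j then 1 else (0::real))"
proof -
  have "(\<lambda>t. (x + t *\<^sub>R axis j 1) $ i) = (\<lambda>t. x $ i + t * (if i = j then 1 else 0))"
    by (simp add: axis_nth_gen)
  moreover have "DERIV (\<lambda>t. x $ i + t * (if i = j then 1 else (0::real))) 0 :> (if i = j then 1 else 0)"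
    by (auto intro!: derivative_eq_intros)
  ultimately show ?thesis by simp
qed

lemma rp_coord_DERIV: "lnd g x \<Longrightarrow>
  DERIV (\<lambda>t. (x + t *\<^sub>R axis j 1) $ i * g (x + t *\<^sub>R axis j 1)) 0 :>
     (if i = j then g x else 0) + x $ i * rpartial j g x"
proof -
  assume "lnd g x"
  show ?thesis
    by (rule DERIV_cong[OF DERIV_mult[OF line_coord_DERIV[of x j i] lnd_DERIV[OF \<open>lnd g x\<close>, of j]]])
       simp
qed

lemma lnd_coord: assumes "lnd g x" shows "lnd (\<lambda>y. y $ i * g y) x"
  unfolding lnd_def[of "\<lambda>y. y $ i * g y"]
proof
  fix j show "(\<lambda>t. (x + t *\<^sub>R axis j 1) $ i * g (x + t *\<^sub>R axis j 1)) differentiable at 0"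
    by (rule DERIV_differentiable[OF rp_coord_DERIV[OF assms(1)]])
qed

lemma rp_coord: "lnd g x \<Longrightarrow>
  rpartial j (\<lambda>y. y $ i * g y) x = (if i = j then g x else 0) + x $ i * rpartial j g x"
  by (rule rp_eqI) (rule rp_coord_DERIV)


declare Ck_real.simps(2)[simp del]

lemma lnd_iff: "lnd g x = (\<forall>j. (\<lambda>t. g (x + t *\<^sub>R axis j 1)) differentiable (at 0))"
  by (simp add: lnd_def)

lemma CK_Suc: "Ck_real (Suc k) \<Omega> g \<longleftrightarrow>
   continuous_on \<Omega> g \<and> (\<forall>x\<in>\<Omega>. lnd g x) \<and> (\<forall>j. Ck_real k \<Omega> (rpartial j g))"
  by (simp add: lnd_iff Ck_real.simps(2))

lemma CK_cont: assumes "Ck_real k \<Omega> g" shows "continuous_on \<Omega> g"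
proof (cases k)
  case 0 then show ?thesis using assms by simp
next
  case (Suc n) then show ?thesis using assms by (simp add: CK_Suc)
qed

lemma CK_lnd: "Ck_real (Suc k) \<Omega> g \<Longrightarrow> x \<in> \<Omega> \<Longrightarrow> lnd g x"
  by (simp add: CK_Suc)

lemma CK_rp: "Ck_real (Suc k) \<Omega> g \<Longrightarrow> Ck_real k \<Omega> (rpartial j g)"
  by (simp add: CK_Suc)

lemma CK_mono: "Ck_real (Suc k) \<Omega> g \<Longrightarrow> Ck_real k \<Omega> g"
proof (induction k arbitrary: g)
  case 0 thus ?case using CK_cont by simp
next
  case (Suc k) thus ?case by (simp add: CK_Suc)
qed

lemma CK_le: "Ck_real (k + d) \<Omega> g \<Longrightarrow> Ck_real k \<Omega> g"
  by (induction d) (auto dest: CK_mono)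

context
  fixes \<Omega> :: "(real ^ 'n::{finite,linorder}) set"
  assumes opn: "open \<Omega>"
begin

lemma CK_cong: "Ck_real k \<Omega> g \<Longrightarrow> \<forall>y\<in>\<Omega>. g y = h y \<Longrightarrow> Ck_real k \<Omega> h"
proof (induction k arbitrary: g h)
  case 0 thus ?case using continuous_on_cong by (metis Ck_real.simps(1))
next
  case (Suc k)
  have c: "continuous_on \<Omega> h" using Suc.prems continuous_on_cong by (metis CK_cont)
  have l: "\<forall>x\<in>\<Omega>. lnd h x" using Suc.prems diff_loc[OF opn] unfolding CK_Suc lnd_iff by blast
  have p: "Ck_real k \<Omega> (rpartial j h)" for j
    using Suc.IH[of "rpartial j g" "rpartial j h"] Suc.prems rp_loc[OF opn, of g h] unfolding CK_Suc
    by blast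
  show ?case using c l p by (simp add: CK_Suc)
qed

lemma CK_add: "Ck_real k \<Omega> g \<Longrightarrow> Ck_real k \<Omega> h \<Longrightarrow> Ck_real k \<Omega> (\<lambda>y. g y + h y)"
proof (induction k arbitrary: g h)
  case 0 thus ?case by (simp add: continuous_on_add)
next
  case (Suc k)
  have c: "continuous_on \<Omega> (\<lambda>y. g y + h y)"
    by (rule continuous_on_add[OF CK_cont[OF Suc.prems(1)] CK_cont[OF Suc.prems(2)]])
  have l: "\<forall>x\<in>\<Omega>. lnd (\<lambda>y. g y + h y) x" using Suc.prems by (simp add: CK_Suc lnd_add)
  have p: "Ck_real k \<Omega> (rpartial j (\<lambda>y. g y + h y))" for j
  proof (rule CK_cong)
    show "Ck_real k \<Omega> (\<lambda>y. rpartial j g y + rpartial j h y)"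
      using Suc.IH Suc.prems by (simp add: CK_Suc)
    show "\<forall>y\<in>\<Omega>. rpartial j g y + rpartial j h y = rpartial j (\<lambda>y. g y + h y) y"
      using Suc.prems by (simp add: CK_Suc rp_add)
  qed
  show ?case using c l p by (simp add: CK_Suc)
qed

lemma CK_cmult: "Ck_real k \<Omega> g \<Longrightarrow> Ck_real k \<Omega> (\<lambda>y. c * g y)"
proof (induction k arbitrary: g)
  case 0 thus ?case by (simp add: continuous_on_mult_left)
next
  case (Suc k)
  have c: "continuous_on \<Omega> (\<lambda>y. c * g y)"
    by (rule continuous_on_mult_left[OF CK_cont[OF Suc.prems]])
  have l: "\<forall>x\<in>\<Omega>. lnd (\<lambda>y. c * g y) x" using Suc.prems by (simp add: CK_Suc lnd_cmult)
  have p: "Ck_real k \<Omega> (rpartial j (\<lambda>y. c * g y))" for j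
  proof (rule CK_cong)
    show "Ck_real k \<Omega> (\<lambda>y. c * rpartial j g y)"
      using Suc.IH Suc.prems by (simp add: CK_Suc)
    show "\<forall>y\<in>\<Omega>. c * rpartial j g y = rpartial j (\<lambda>y. c * g y) y"
      using Suc.prems by (simp add: CK_Suc rp_cmult)
  qed
  show ?case using c l p by (simp add: CK_Suc)
qed

lemma CK_const: "Ck_real k \<Omega> (\<lambda>y. c)"
proof (induction k arbitrary: c)
  case 0 thus ?case by simp
next
  case (Suc k)
  have e: "rpartial j (\<lambda>y. c) = (\<lambda>y. 0)" for j by (rule ext) (simp add: rp_const)
  have "\<forall>j. Ck_real k \<Omega> (rpartial j (\<lambda>y. c))" unfolding e by (simp add: Suc.IH)
  thus ?case by (simp add: CK_Suc lnd_const)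
qed

lemma CK_sum: "finite S \<Longrightarrow> (\<And>i. i \<in> S \<Longrightarrow> Ck_real k \<Omega> (g i)) \<Longrightarrow> Ck_real k \<Omega> (\<lambda>y. \<Sum>i\<in>S. g i y)"
proof (induction S rule: finite_induct)
  case empty then show ?case by (simp add: CK_const)
next
  case (insert a F) then show ?case by (simp add: CK_add)
qed

lemma cont_coord: "continuous_on \<Omega> (\<lambda>y::real^'n::{finite,linorder}. y $ i)"
  by (intro continuous_intros)

lemma CK_coord: "Ck_real k \<Omega> g \<Longrightarrow> Ck_real k \<Omega> (\<lambda>y. y $ i * g y)"
proof (induction k arbitrary: g)
  case 0 thus ?case by (simp add: continuous_on_mult cont_coord)
next
  case (Suc k)
  have c: "continuous_on \<Omega> (\<lambda>y. y $ i * g y)"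
    by (rule continuous_on_mult[OF cont_coord CK_cont[OF Suc.prems]])
  have l: "\<forall>x\<in>\<Omega>. lnd (\<lambda>y. y $ i * g y) x" using Suc.prems by (simp add: CK_Suc lnd_coord)
  have p: "Ck_real k \<Omega> (rpartial j (\<lambda>y. y $ i * g y))" for j
  proof (rule CK_cong)
    show "Ck_real k \<Omega> (\<lambda>y. (if i = j then g y else 0) + y $ i * rpartial j g y)"
    proof (rule CK_add)
      show "Ck_real k \<Omega> (\<lambda>y. if i = j then g y else 0)"
        using CK_mono[OF Suc.prems] CK_const by (cases "i = j") auto
      show "Ck_real k \<Omega> (\<lambda>y. y $ i * rpartial j g y)"
        using Suc.IH Suc.prems by (simp add: CK_Suc)
    qed
    show "\<forall>y\<in>\<Omega>. (if i = j then g y else 0) + y $ i * rpartial j g y = rpartial j (\<lambda>y. y $ i * g y) y"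
      using Suc.prems by (simp add: CK_Suc rp_coord)
  qed
  show ?case using c l p by (simp add: CK_Suc)
qed

end


lemma line_DERIV:
  fixes g :: "real ^ 'n::{finite,linorder} \<Rightarrow> real"
  assumes "lnd g (p + s *\<^sub>R axis a 1)"
  shows "DERIV (\<lambda>\<sigma>. g (p + \<sigma> *\<^sub>R axis a 1)) s :> rpartial a g (p + s *\<^sub>R axis a 1)"
proof -
  have D: "DERIV (\<lambda>t. g ((p + s *\<^sub>R axis a 1) + t *\<^sub>R axis a 1)) 0 :> rpartial a g (p + s *\<^sub>R axis a 1)"
    by (rule lnd_DERIV[OF assms])
  have e: "(\<lambda>t. g ((p + s *\<^sub>R axis a 1) + t *\<^sub>R axis a 1)) = (\<lambda>t. g (p + (t + s) *\<^sub>R axis a 1))"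
    by (simp add: scaleR_add_left algebra_simps)
  from D[unfolded e] have "DERIV (\<lambda>\<sigma>. g (p + \<sigma> *\<^sub>R axis a 1)) (0 + s) :> rpartial a g (p + s *\<^sub>R axis a 1)"
    by (subst DERIV_shift) simp
  thus ?thesis by simp
qed

context
  fixes \<Omega> :: "(real ^ 'n::{finite,linorder}) set"
  assumes opn: "open \<Omega>"
begin

lemma mixed_mvt:
  fixes g :: "real ^ 'n::{finite,linorder} \<Rightarrow> real"
  assumes g2: "Ck_real 2 \<Omega> g" and ball: "ball x e \<subseteq> \<Omega>" and h: "0 < h" "2 * h < e"
  shows "\<exists>\<xi>. dist \<xi> x < 2 * h \<and>
    g (x + h *\<^sub>R axis a 1 + h *\<^sub>R axis b 1) - g (x + h *\<^sub>R axis a 1) - g (x + h *\<^sub>R axis b 1) + g x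
      = h * h * rpartial b (rpartial a g) \<xi>"
proof -
  let ?u = "axis a (1::real) :: real ^ 'n::{finite,linorder}" and ?v = "axis b (1::real) :: real ^ 'n::{finite,linorder}"
  have inO: "x + s *\<^sub>R ?u + t *\<^sub>R ?v \<in> \<Omega>" if "0 \<le> s" "s \<le> h" "0 \<le> t" "t \<le> h" for s t
  proof -
    have "norm (s *\<^sub>R ?u + t *\<^sub>R ?v) \<le> norm (s *\<^sub>R ?u) + norm (t *\<^sub>R ?v)" by (rule norm_triangle_ineq)
    also have "\<dots> = s + t" using that by simp
    finally have "dist (x + s *\<^sub>R ?u + t *\<^sub>R ?v) x < e" using that h
      by (simp add: dist_norm add.assoc)
    thus ?thesis using ball by (auto simp: dist_commute)
  qed
  have g1: "\<forall>y\<in>\<Omega>. lnd g y" using g2 by (simp add: CK_Suc numeral_2_eq_2)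
  have pa: "Ck_real 1 \<Omega> (rpartial a g)" using g2 by (simp add: CK_Suc numeral_2_eq_2)
  hence pa1: "\<forall>y\<in>\<Omega>. lnd (rpartial a g) y" by (simp add: CK_Suc)
  define \<phi> where "\<phi> = (\<lambda>\<sigma>. g (x + h *\<^sub>R ?v + \<sigma> *\<^sub>R ?u) - g (x + \<sigma> *\<^sub>R ?u))"
  have "\<exists>z>0. z < h \<and> \<phi> h - \<phi> 0 = (h - 0) *
      (rpartial a g (x + h *\<^sub>R ?v + z *\<^sub>R ?u) - rpartial a g (x + z *\<^sub>R ?u))"
  proof (rule MVT2[OF h(1)])
    fix s :: real assume s: "0 \<le> s" "s \<le> h"
    have l1: "lnd g (x + h *\<^sub>R ?v + s *\<^sub>R ?u)"
      using g1 inO[OF s, of h] h by (simp add: algebra_simps)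
    have l2: "lnd g (x + s *\<^sub>R ?u)" using g1 inO[OF s, of 0] h by simp
    show "DERIV \<phi> s :> rpartial a g (x + h *\<^sub>R ?v + s *\<^sub>R ?u) - rpartial a g (x + s *\<^sub>R ?u)"
      unfolding \<phi>_def by (intro DERIV_diff line_DERIV l1 l2)
  qed
  then obtain s where s: "0 < s" "s < h"
    and es: "\<phi> h - \<phi> 0 = h * (rpartial a g (x + s *\<^sub>R ?u + h *\<^sub>R ?v) - rpartial a g (x + s *\<^sub>R ?u))"
    by (auto simp: algebra_simps)
  define \<psi> where "\<psi> = (\<lambda>\<tau>. rpartial a g (x + s *\<^sub>R ?u + \<tau> *\<^sub>R ?v))"
  have "\<exists>z>0. z < h \<and> \<psi> h - \<psi> 0 = (h - 0) * rpartial b (rpartial a g) (x + s *\<^sub>R ?u + z *\<^sub>R ?v)"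
  proof (rule MVT2[OF h(1)])
    fix t :: real assume t: "0 \<le> t" "t \<le> h"
    have l: "lnd (rpartial a g) (x + s *\<^sub>R ?u + t *\<^sub>R ?v)"
      using pa1 inO[of s t] s t by simp
    show "DERIV \<psi> t :> rpartial b (rpartial a g) (x + s *\<^sub>R ?u + t *\<^sub>R ?v)"
      unfolding \<psi>_def by (rule line_DERIV[OF l])
  qed
  then obtain t where t: "0 < t" "t < h"
    and et: "\<psi> h - \<psi> 0 = h * rpartial b (rpartial a g) (x + s *\<^sub>R ?u + t *\<^sub>R ?v)"
    by auto
  have "dist (x + s *\<^sub>R ?u + t *\<^sub>R ?v) x \<le> s + t"
  proof -
    have "dist (x + s *\<^sub>R ?u + t *\<^sub>R ?v) x = norm (s *\<^sub>R ?u + t *\<^sub>R ?v)" by (simp add: dist_norm)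
    also have "\<dots> \<le> norm (s *\<^sub>R ?u) + norm (t *\<^sub>R ?v)" by (rule norm_triangle_ineq)
    also have "\<dots> = s + t" using s t by simp
    finally show ?thesis .
  qed
  hence d: "dist (x + s *\<^sub>R ?u + t *\<^sub>R ?v) x < 2 * h" using s t by simp
  have "g (x + h *\<^sub>R ?u + h *\<^sub>R ?v) - g (x + h *\<^sub>R ?u) - g (x + h *\<^sub>R ?v) + g x = \<phi> h - \<phi> 0"
    unfolding \<phi>_def by (simp add: algebra_simps)
  also have "\<dots> = h * (\<psi> h - \<psi> 0)" unfolding es \<psi>_def by simp
  also have "\<dots> = h * h * rpartial b (rpartial a g) (x + s *\<^sub>R ?u + t *\<^sub>R ?v)"
    unfolding et by simp
  finally show ?thesis using d by blast
qed

lemma schwarz: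
  fixes g :: "real ^ 'n::{finite,linorder} \<Rightarrow> real"
  assumes g2: "Ck_real 2 \<Omega> g" and x: "x \<in> \<Omega>"
  shows "rpartial i (rpartial j g) x = rpartial j (rpartial i g) x"
proof (rule ccontr)
  let ?A = "rpartial j (rpartial i g)" and ?B = "rpartial i (rpartial j g)"
  assume ne: "?B x \<noteq> ?A x"
  define \<epsilon> where "\<epsilon> = \<bar>?A x - ?B x\<bar> / 2"
  have \<epsilon>: "\<epsilon> > 0" using ne by (simp add: \<epsilon>_def)
  have cA: "continuous_on \<Omega> ?A" and cB: "continuous_on \<Omega> ?B"
    using g2 by (auto simp: CK_Suc numeral_2_eq_2 intro: CK_cont)
  have "isCont ?A x" using cA opn x continuous_on_eq_continuous_at by blast
  then obtain dA where dA: "dA > 0" "\<And>y. dist y x < dA \<Longrightarrow> dist (?A y) (?A x) < \<epsilon>"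
    using \<epsilon> unfolding continuous_at_eps_delta by blast
  have "isCont ?B x" using cB opn x continuous_on_eq_continuous_at by blast
  then obtain dB where dB: "dB > 0" "\<And>y. dist y x < dB \<Longrightarrow> dist (?B y) (?B x) < \<epsilon>"
    using \<epsilon> unfolding continuous_at_eps_delta by blast
  obtain e where e: "e > 0" "ball x e \<subseteq> \<Omega>" using opn x by (meson open_contains_ball)
  define h where "h = min e (min dA dB) / 4"
  have h: "0 < h" "2 * h < e" "2 * h < dA" "2 * h < dB" using e dA dB by (auto simp: h_def)
  obtain \<xi>1 where \<xi>1: "dist \<xi>1 x < 2 * h" and E1:
    "g (x + h *\<^sub>R axis i 1 + h *\<^sub>R axis j 1) - g (x + h *\<^sub>R axis i 1) - g (x + h *\<^sub>R axis j 1) + g x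
      = h * h * ?A \<xi>1"
    using mixed_mvt[OF g2 e(2) h(1,2), of i j] by blast
  obtain \<xi>2 where \<xi>2: "dist \<xi>2 x < 2 * h" and E2:
    "g (x + h *\<^sub>R axis j 1 + h *\<^sub>R axis i 1) - g (x + h *\<^sub>R axis j 1) - g (x + h *\<^sub>R axis i 1) + g x
      = h * h * ?B \<xi>2"
    using mixed_mvt[OF g2 e(2) h(1,2), of j i] by blast
  have "h * h * ?A \<xi>1 = h * h * ?B \<xi>2" using E1 E2 by (simp add: algebra_simps)
  hence eq: "?A \<xi>1 = ?B \<xi>2" using h(1) by simp
  have "dist (?A \<xi>1) (?A x) < \<epsilon>" using dA(2) \<xi>1 h by simp
  moreover have "dist (?B \<xi>2) (?B x) < \<epsilon>" using dB(2) \<xi>2 h by simp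
  ultimately have "\<bar>?A x - ?B x\<bar> < 2 * \<epsilon>" using eq by (simp add: dist_real_def)
  thus False by (simp add: \<epsilon>_def)
qed

end


lemma Ck_lnd: "Ck (Suc k) \<Omega> F \<Longrightarrow> x \<in> \<Omega> \<Longrightarrow> lnd (\<lambda>y. F y A) x"
  unfolding Ck_def using CK_lnd by blast

lemma Ck_mono: "Ck (Suc k) \<Omega> F \<Longrightarrow> Ck k \<Omega> F"
  unfolding Ck_def using CK_mono by blast

lemma Ck_cp: "Ck (Suc k) \<Omega> F \<Longrightarrow> Ck k \<Omega> (cpartial j F)"
  unfolding Ck_def cpartial_def using CK_rp by blast

lemma cp_apply: "cpartial j F x A = rpartial j (\<lambda>y. F y A) x"
  by (simp add: cpartial_def)

lemma L_lin_apply: "(cl_e i \<odot> a) C = blade_sign {i} (tg i C) * a (tg i C)" by (rule L_apply)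

context
  fixes \<Omega> :: "(real ^ 'n::{finite,linorder}) set"
  assumes opn: "open \<Omega>"
begin

lemma Ck_cong: "Ck k \<Omega> F \<Longrightarrow> \<forall>y\<in>\<Omega>. F y = G y \<Longrightarrow> Ck k \<Omega> G"
proof -
  assume a: "Ck k \<Omega> F" "\<forall>y\<in>\<Omega>. F y = G y"
  show ?thesis unfolding Ck_def
  proof
    fix A show "Ck_real k \<Omega> (\<lambda>x. G x A)"
      by (rule CK_cong[OF opn, of _ "\<lambda>x. F x A"]) (use a in \<open>auto simp: Ck_def\<close>)
  qed
qed

lemma Ck_add: "Ck k \<Omega> F \<Longrightarrow> Ck k \<Omega> G \<Longrightarrow> Ck k \<Omega> (\<lambda>y. F y + G y)"
  unfolding Ck_def using CK_add[OF opn] by simp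

lemma Ck_sc: "Ck k \<Omega> F \<Longrightarrow> Ck k \<Omega> (\<lambda>y. sc c (F y))"
  unfolding Ck_def using CK_cmult[OF opn] by simp

lemma Ck_uminus: "Ck k \<Omega> F \<Longrightarrow> Ck k \<Omega> (\<lambda>y. - F y)"
proof -
  assume "Ck k \<Omega> F"
  hence "Ck k \<Omega> (\<lambda>y. sc (-1) (F y))" by (rule Ck_sc)
  moreover have "sc (-1) (F y) = - F y" for y by (rule ext) simp
  ultimately show ?thesis by simp
qed

lemma Ck_zero: "Ck k \<Omega> (\<lambda>y. 0)"
  unfolding Ck_def using CK_const[OF opn, of k 0] by simp

lemma Ck_sum: "finite S \<Longrightarrow> (\<And>i. i \<in> S \<Longrightarrow> Ck k \<Omega> (F i)) \<Longrightarrow> Ck k \<Omega> (\<lambda>y. \<Sum>i\<in>S. F i y)"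
proof (induction S rule: finite_induct)
  case empty then show ?case by (simp add: Ck_def CK_const[OF opn])
next
  case (insert a S')
  have "Ck k \<Omega> (\<lambda>y. F a y + (\<Sum>i\<in>S'. F i y))" by (rule Ck_add) (use insert in auto)
  thus ?case by (simp only: sum.insert[OF insert.hyps(1,2)])
qed

lemma Ck_coord: "Ck k \<Omega> F \<Longrightarrow> Ck k \<Omega> (\<lambda>y. sc (y $ i) (F y))"
  unfolding Ck_def using CK_coord[OF opn] by simp

lemma Ck_L: "Ck k \<Omega> F \<Longrightarrow> Ck k \<Omega> (\<lambda>y. cl_e i \<odot> F y)"
  unfolding Ck_def L_apply
proof
  fix A assume "\<forall>A. Ck_real k \<Omega> (\<lambda>x. F x A)"
  thus "Ck_real k \<Omega> (\<lambda>x. blade_sign {i} (tg i A) * F x (tg i A))" by (intro CK_cmult[OF opn]) simp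
qed

lemma Ck_R: "Ck k \<Omega> F \<Longrightarrow> Ck k \<Omega> (\<lambda>y. F y \<odot> cl_e i)"
  unfolding Ck_def R_apply
proof
  fix A assume "\<forall>A. Ck_real k \<Omega> (\<lambda>x. F x A)"
  thus "Ck_real k \<Omega> (\<lambda>x. blade_sign (tg i A) {i} * F x (tg i A))" by (intro CK_cmult[OF opn]) simp
qed

lemma cp_loc: "\<forall>y\<in>\<Omega>. F y = G y \<Longrightarrow> x \<in> \<Omega> \<Longrightarrow> cpartial j F x = cpartial j G x"
proof (rule ext)
  fix A assume "\<forall>y\<in>\<Omega>. F y = G y" "x \<in> \<Omega>"
  thus "cpartial j F x A = cpartial j G x A" unfolding cpartial_def
    by (intro rp_loc[OF opn]) auto
qed

lemma cp_zero: "\<forall>y\<in>\<Omega>. F y = 0 \<Longrightarrow> x \<in> \<Omega> \<Longrightarrow> cpartial j F x = 0"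
proof -
  assume "\<forall>y\<in>\<Omega>. F y = 0" "x \<in> \<Omega>"
  hence "cpartial j F x = cpartial j (\<lambda>y. 0) x" by (intro cp_loc) auto
  also have "\<dots> = 0" by (rule ext) (simp add: cpartial_def rp_const)
  finally show ?thesis .
qed

lemma cp_add: "Ck 1 \<Omega> F \<Longrightarrow> Ck 1 \<Omega> G \<Longrightarrow> x \<in> \<Omega> \<Longrightarrow>
   cpartial j (\<lambda>y. F y + G y) x = cpartial j F x + cpartial j G x"
  by (rule ext) (simp add: cpartial_def rp_add Ck_lnd[where k=0, simplified])

lemma cp_sc: "Ck 1 \<Omega> F \<Longrightarrow> x \<in> \<Omega> \<Longrightarrow>
   cpartial j (\<lambda>y. sc c (F y)) x = sc c (cpartial j F x)"
  by (rule ext) (simp add: cpartial_def rp_cmult Ck_lnd[where k=0, simplified])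

lemma cp_uminus: "Ck 1 \<Omega> F \<Longrightarrow> x \<in> \<Omega> \<Longrightarrow>
   cpartial j (\<lambda>y. - F y) x = - cpartial j F x"
proof -
  assume a: "Ck 1 \<Omega> F" "x \<in> \<Omega>"
  have e: "(\<lambda>y. - F y) = (\<lambda>y. sc (-1) (F y))" by (rule ext, rule ext) simp
  show ?thesis unfolding e cp_sc[OF a] by (rule ext) simp
qed

lemma cp_sum: "finite S \<Longrightarrow> (\<And>i. i \<in> S \<Longrightarrow> Ck 1 \<Omega> (F i)) \<Longrightarrow> x \<in> \<Omega> \<Longrightarrow>
   cpartial j (\<lambda>y. \<Sum>i\<in>S. F i y) x = (\<Sum>i\<in>S. cpartial j (F i) x)"
proof (rule ext)
  fix A assume a: "finite S" "\<And>i. i \<in> S \<Longrightarrow> Ck 1 \<Omega> (F i)" "x \<in> \<Omega>"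
  have "rpartial j (\<lambda>y. \<Sum>i\<in>S. F i y A) x = (\<Sum>i\<in>S. rpartial j (\<lambda>y. F i y A) x)"
    by (rule rp_sum[OF a(1)]) (use a in \<open>auto intro: Ck_lnd[where k=0, simplified]\<close>)
  thus "cpartial j (\<lambda>y. \<Sum>i\<in>S. F i y) x A = (\<Sum>i\<in>S. cpartial j (F i) x) A"
    by (simp add: cpartial_def fun_sum_apply)
qed

lemma cp_coord: "Ck 1 \<Omega> F \<Longrightarrow> x \<in> \<Omega> \<Longrightarrow>
   cpartial j (\<lambda>y. sc (y $ i) (F y)) x = (if i = j then F x else 0) + sc (x $ i) (cpartial j F x)"
  by (rule ext) (simp add: cpartial_def rp_coord Ck_lnd[where k=0, simplified])

lemma cp_L: "Ck 1 \<Omega> F \<Longrightarrow> x \<in> \<Omega> \<Longrightarrow>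
   cpartial j (\<lambda>y. cl_e i \<odot> F y) x = cl_e i \<odot> cpartial j F x"
  by (rule ext) (simp add: cpartial_def L_apply rp_cmult Ck_lnd[where k=0, simplified])

lemma cp_R: "Ck 1 \<Omega> F \<Longrightarrow> x \<in> \<Omega> \<Longrightarrow>
   cpartial j (\<lambda>y. F y \<odot> cl_e i) x = cpartial j F x \<odot> cl_e i"
  by (rule ext) (simp add: cpartial_def R_apply rp_cmult Ck_lnd[where k=0, simplified])

lemma cp_swap: "Ck 2 \<Omega> F \<Longrightarrow> x \<in> \<Omega> \<Longrightarrow>
   cpartial i (cpartial j F) x = cpartial j (cpartial i F) x"
proof (rule ext)
  fix A assume "Ck 2 \<Omega> F" "x \<in> \<Omega>"
  hence "Ck_real 2 \<Omega> (\<lambda>y. F y A)" by (simp add: Ck_def)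
  from schwarz[OF opn this \<open>x \<in> \<Omega>\<close>, of i j]
  show "cpartial i (cpartial j F) x A = cpartial j (cpartial i F) x A"
    by (simp add: cpartial_def)
qed

end


definition Pv :: "real ^ 'n::{finite,linorder} \<Rightarrow> 'n clifford \<Rightarrow> 'n clifford" where
  "Pv y a = (\<Sum>k\<in>UNIV. sc (y $ k) (a \<odot> cl_e k))"

definition Qv :: "real ^ 'n::{finite,linorder} \<Rightarrow> 'n clifford \<Rightarrow> 'n clifford" where
  "Qv y a = (\<Sum>k\<in>UNIV. sc (y $ k) (cl_e k \<odot> a))"

lemma additive_sum:
  fixes \<phi> :: "'n::{finite,linorder} clifford \<Rightarrow> 'n clifford"
  assumes add: "\<And>a b. \<phi> (a + b) = \<phi> a + \<phi> b" and z: "\<phi> 0 = 0"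
  shows "\<phi> (\<Sum>i\<in>S. u i) = (\<Sum>i\<in>S. \<phi> (u i))"
proof (induction S rule: infinite_finite_induct)
  case (infinite A) thus ?case by (metis sum.infinite z)
next
  case empty thus ?case by (metis sum.empty z)
next
  case (insert x F) thus ?case by (metis add sum.insert)
qed

lemma cl_vec_sc: "cl_vec y = (\<Sum>j\<in>UNIV. sc (y $ j) (cl_e j))"
  unfolding cl_vec_def sc_def by simp

lemma vec_right: "a \<odot> cl_vec y = Pv y a"
  unfolding cl_vec_sc Pv_def by (simp add: mult_sum_right mult_sc_right)

lemma vec_left: "cl_vec y \<odot> a = Qv y a"
  unfolding cl_vec_sc Qv_def by (simp add: mult_sum_left mult_sc_left)

lemma sc_uminus: "sc c (- a) = - sc c a" by (rule ext) simp
lemma sc_minus1: "sc (-1) a = - a" by (rule ext) simp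
lemma sc2: "sc 2 a = a + a" by (rule ext) simp
lemma sc_add_left: "sc (c + d) a = sc c a + sc d a" by (rule ext) (simp add: algebra_simps)

lemma Pv_add: "Pv y (a + b) = Pv y a + Pv y b"
  unfolding Pv_def by (simp add: mult_add_left sc_add sum.distrib)
lemma Pv_zero[simp]: "Pv y 0 = 0"
  unfolding Pv_def by simp
lemma Pv_sc: "Pv y (sc c a) = sc c (Pv y a)"
  unfolding Pv_def by (simp add: mult_sc_left sc_sc sc_sum mult.commute)
lemma Pv_uminus: "Pv y (- a) = - Pv y a"
  by (metis Pv_sc sc_minus1)
lemma Pv_sum: "Pv y (\<Sum>i\<in>S. u i) = (\<Sum>i\<in>S. Pv y (u i))"
  by (rule additive_sum) (rule Pv_add, rule Pv_zero)

lemma Qv_add: "Qv y (a + b) = Qv y a + Qv y b"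
  unfolding Qv_def by (simp add: mult_add_right sc_add sum.distrib)
lemma Qv_zero[simp]: "Qv y 0 = 0"
  unfolding Qv_def by simp
lemma Qv_sc: "Qv y (sc c a) = sc c (Qv y a)"
  unfolding Qv_def by (simp add: mult_sc_right sc_sc sc_sum mult.commute)
lemma Qv_uminus: "Qv y (- a) = - Qv y a"
  by (metis Qv_sc sc_minus1)
lemma Qv_sum: "Qv y (\<Sum>i\<in>S. u i) = (\<Sum>i\<in>S. Qv y (u i))"
  by (rule additive_sum) (rule Qv_add, rule Qv_zero)

lemma Tm_add: "Tm (a + b) = Tm a + Tm b"
  unfolding Tm_def by (simp add: mult_add_left mult_add_right sum.distrib)
lemma Tm_zero[simp]: "Tm 0 = 0"
  unfolding Tm_def by simp
lemma Tm_sc: "Tm (sc c a) = sc c (Tm a)"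
  unfolding Tm_def by (simp add: mult_sc_left mult_sc_right sc_sum)
lemma Tm_uminus: "Tm (- a) = - Tm a"
  by (metis Tm_sc sc_minus1)
lemma Tm_sum: "Tm (\<Sum>i\<in>S. u i) = (\<Sum>i\<in>S. Tm (u i))"
  by (rule additive_sum) (rule Tm_add, rule Tm_zero)

lemma dl_eq: "dirac_l F = (\<lambda>x. \<Sum>j\<in>UNIV. cl_e j \<odot> cpartial j F x)"
  by (rule ext) (simp add: dirac_l_def)
lemma dr_eq: "dirac_r F = (\<lambda>x. \<Sum>j\<in>UNIV. cpartial j F x \<odot> cl_e j)"
  by (rule ext) (simp add: dirac_r_def)
lemma lap_eq: "laplace F = (\<lambda>x. \<Sum>j\<in>UNIV. cpartial j (cpartial j F) x)"
  by (rule ext) (simp add: laplace_def)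

context
  fixes \<Omega> :: "(real ^ 'n::{finite,linorder}) set"
  assumes opn: "open \<Omega>"
begin

lemma Ck_dl: "Ck (Suc k) \<Omega> F \<Longrightarrow> Ck k \<Omega> (dirac_l F)"
  unfolding dl_eq by (intro Ck_sum[OF opn] Ck_L[OF opn] Ck_cp) auto

lemma Ck_dr: "Ck (Suc k) \<Omega> F \<Longrightarrow> Ck k \<Omega> (dirac_r F)"
  unfolding dr_eq by (intro Ck_sum[OF opn] Ck_R[OF opn] Ck_cp) auto

lemma Ck_lap: "Ck (Suc (Suc k)) \<Omega> F \<Longrightarrow> Ck k \<Omega> (laplace F)"
  unfolding lap_eq by (intro Ck_sum[OF opn] Ck_cp) auto

lemma Ck_T: "Ck k \<Omega> F \<Longrightarrow> Ck k \<Omega> (\<lambda>y. Tm (F y))"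
  unfolding Tm_def by (intro Ck_sum[OF opn] Ck_R[OF opn] Ck_L[OF opn]) auto

lemma Ck_P: "Ck k \<Omega> F \<Longrightarrow> Ck k \<Omega> (\<lambda>y. Pv y (F y))"
  unfolding Pv_def by (intro Ck_sum[OF opn] Ck_coord[OF opn] Ck_R[OF opn]) auto

lemma Ck_Q: "Ck k \<Omega> F \<Longrightarrow> Ck k \<Omega> (\<lambda>y. Qv y (F y))"
  unfolding Qv_def by (intro Ck_sum[OF opn] Ck_coord[OF opn] Ck_L[OF opn]) auto

lemma dl_loc: "\<forall>y\<in>\<Omega>. F y = G y \<Longrightarrow> x \<in> \<Omega> \<Longrightarrow> dirac_l F x = dirac_l G x"
proof -
  assume a: "\<forall>y\<in>\<Omega>. F y = G y" "x \<in> \<Omega>"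
  hence "\<forall>j. cpartial j F x = cpartial j G x" using cp_loc[OF opn] by blast
  thus ?thesis unfolding dirac_l_def by simp
qed
lemma dr_loc: "\<forall>y\<in>\<Omega>. F y = G y \<Longrightarrow> x \<in> \<Omega> \<Longrightarrow> dirac_r F x = dirac_r G x"
proof -
  assume a: "\<forall>y\<in>\<Omega>. F y = G y" "x \<in> \<Omega>"
  hence "\<forall>j. cpartial j F x = cpartial j G x" using cp_loc[OF opn] by blast
  thus ?thesis unfolding dirac_r_def by simp
qed
lemma lap_loc: "\<forall>y\<in>\<Omega>. F y = G y \<Longrightarrow> x \<in> \<Omega> \<Longrightarrow> laplace F x = laplace G x"
proof -
  assume a: "\<forall>y\<in>\<Omega>. F y = G y" "x \<in> \<Omega>"
  have "\<forall>y\<in>\<Omega>. cpartial j F y = cpartial j G y" for j using a cp_loc[OF opn] by blast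
  hence "\<forall>j. cpartial j (cpartial j F) x = cpartial j (cpartial j G) x" using cp_loc[OF opn] a(2) by blast
  thus ?thesis unfolding laplace_def by simp
qed
lemma dl_zero: "\<forall>y\<in>\<Omega>. F y = 0 \<Longrightarrow> x \<in> \<Omega> \<Longrightarrow> dirac_l F x = 0"
proof -
  assume a: "\<forall>y\<in>\<Omega>. F y = 0" "x \<in> \<Omega>"
  hence "\<forall>j. cpartial j F x = 0" using cp_zero[OF opn] by blast
  thus ?thesis unfolding dirac_l_def by simp
qed
lemma dr_zero: "\<forall>y\<in>\<Omega>. F y = 0 \<Longrightarrow> x \<in> \<Omega> \<Longrightarrow> dirac_r F x = 0"
proof -
  assume a: "\<forall>y\<in>\<Omega>. F y = 0" "x \<in> \<Omega>"
  hence "\<forall>j. cpartial j F x = 0" using cp_zero[OF opn] by blast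
  thus ?thesis unfolding dirac_r_def by simp
qed
lemma lap_zero: "\<forall>y\<in>\<Omega>. F y = 0 \<Longrightarrow> x \<in> \<Omega> \<Longrightarrow> laplace F x = 0"
proof -
  assume a: "\<forall>y\<in>\<Omega>. F y = 0" "x \<in> \<Omega>"
  have "\<forall>y\<in>\<Omega>. cpartial j F y = 0" for j using a cp_zero[OF opn] by blast
  hence "\<forall>j. cpartial j (cpartial j F) x = 0" using cp_zero[OF opn] a(2) by blast
  thus ?thesis unfolding laplace_def by simp
qed

lemma dl_add: "Ck 1 \<Omega> F \<Longrightarrow> Ck 1 \<Omega> G \<Longrightarrow> x \<in> \<Omega> \<Longrightarrow>
  dirac_l (\<lambda>y. F y + G y) x = dirac_l F x + dirac_l G x"
  unfolding dirac_l_def by (simp add: cp_add[OF opn] mult_add_right sum.distrib)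
lemma dr_add: "Ck 1 \<Omega> F \<Longrightarrow> Ck 1 \<Omega> G \<Longrightarrow> x \<in> \<Omega> \<Longrightarrow>
  dirac_r (\<lambda>y. F y + G y) x = dirac_r F x + dirac_r G x"
  unfolding dirac_r_def by (simp add: cp_add[OF opn] mult_add_left sum.distrib)
lemma dl_sc: "Ck 1 \<Omega> F \<Longrightarrow> x \<in> \<Omega> \<Longrightarrow> dirac_l (\<lambda>y. sc c (F y)) x = sc c (dirac_l F x)"
  unfolding dirac_l_def by (simp add: cp_sc[OF opn] mult_sc_right sc_sum)
lemma dr_sc: "Ck 1 \<Omega> F \<Longrightarrow> x \<in> \<Omega> \<Longrightarrow> dirac_r (\<lambda>y. sc c (F y)) x = sc c (dirac_r F x)"
  unfolding dirac_r_def by (simp add: cp_sc[OF opn] mult_sc_left sc_sum)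
lemma dl_uminus: "Ck 1 \<Omega> F \<Longrightarrow> x \<in> \<Omega> \<Longrightarrow> dirac_l (\<lambda>y. - F y) x = - dirac_l F x"
  unfolding dirac_l_def by (simp add: cp_uminus[OF opn] mult_minus_right sum_negf)
lemma dr_uminus: "Ck 1 \<Omega> F \<Longrightarrow> x \<in> \<Omega> \<Longrightarrow> dirac_r (\<lambda>y. - F y) x = - dirac_r F x"
  unfolding dirac_r_def by (simp add: cp_uminus[OF opn] mult_minus_left sum_negf)

lemma cp2_add: "Ck 2 \<Omega> F \<Longrightarrow> Ck 2 \<Omega> G \<Longrightarrow> x \<in> \<Omega> \<Longrightarrow>
  cpartial j (cpartial j (\<lambda>y. F y + G y)) x = cpartial j (cpartial j F) x + cpartial j (cpartial j G) x"
proof -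
  assume a: "Ck 2 \<Omega> F" "Ck 2 \<Omega> G" "x \<in> \<Omega>"
  have F1: "Ck 1 \<Omega> F" "Ck 1 \<Omega> G" using a Ck_mono by (auto simp: numeral_2_eq_2)
  have "cpartial j (cpartial j (\<lambda>y. F y + G y)) x = cpartial j (\<lambda>y. cpartial j F y + cpartial j G y) x"
    using cp_add[OF opn F1] by (intro cp_loc[OF opn] a) auto
  also have "\<dots> = cpartial j (cpartial j F) x + cpartial j (cpartial j G) x"
    using a by (intro cp_add[OF opn] Ck_cp) (auto simp: numeral_2_eq_2)
  finally show ?thesis .
qed

lemma lap_add: "Ck 2 \<Omega> F \<Longrightarrow> Ck 2 \<Omega> G \<Longrightarrow> x \<in> \<Omega> \<Longrightarrow>
  laplace (\<lambda>y. F y + G y) x = laplace F x + laplace G x"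
  unfolding laplace_def by (simp add: cp2_add sum.distrib)

lemma cp2_sc: "Ck 2 \<Omega> F \<Longrightarrow> x \<in> \<Omega> \<Longrightarrow>
  cpartial j (cpartial j (\<lambda>y. sc c (F y))) x = sc c (cpartial j (cpartial j F) x)"
proof -
  assume a: "Ck 2 \<Omega> F" "x \<in> \<Omega>"
  have F1: "Ck 1 \<Omega> F" using a Ck_mono by (auto simp: numeral_2_eq_2)
  have "cpartial j (cpartial j (\<lambda>y. sc c (F y))) x = cpartial j (\<lambda>y. sc c (cpartial j F y)) x"
    using cp_sc[OF opn F1] by (intro cp_loc[OF opn] a) auto
  also have "\<dots> = sc c (cpartial j (cpartial j F) x)"
    using a by (intro cp_sc[OF opn] Ck_cp) (auto simp: numeral_2_eq_2)
  finally show ?thesis .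
qed

lemma lap_sc: "Ck 2 \<Omega> F \<Longrightarrow> x \<in> \<Omega> \<Longrightarrow> laplace (\<lambda>y. sc c (F y)) x = sc c (laplace F x)"
  unfolding laplace_def by (simp add: cp2_sc sc_sum)

end


lemma sum_if_eq: "(\<Sum>k\<in>UNIV. (if k = j then f k else 0) + g k) = f j + (\<Sum>k\<in>UNIV. g k)"
  for f g :: "'n::{finite,linorder} \<Rightarrow> 'n clifford"
  by (simp add: sum.distrib)

context
  fixes \<Omega> :: "(real ^ 'n::{finite,linorder}) set"
  assumes opn: "open \<Omega>"
begin

lemma cp_P:
  assumes a: "Ck 1 \<Omega> H" "x \<in> \<Omega>"
  shows "cpartial j (\<lambda>y. Pv y (H y)) x = H x \<odot> cl_e j + Pv x (cpartial j H x)"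
proof -
  have "cpartial j (\<lambda>y. Pv y (H y)) x = (\<Sum>k\<in>UNIV. cpartial j (\<lambda>y. sc (y$k) (H y \<odot> cl_e k)) x)"
    unfolding Pv_def by (rule cp_sum[OF opn], simp, rule Ck_coord[OF opn], rule Ck_R[OF opn], rule a, rule a)
  also have "\<dots> = (\<Sum>k\<in>UNIV. (if k = j then H x \<odot> cl_e k else 0) + sc (x$k) (cpartial j H x \<odot> cl_e k))"
  proof (intro sum.cong refl)
    fix k
    have R1: "Ck 1 \<Omega> (\<lambda>y. H y \<odot> cl_e k)" by (rule Ck_R[OF opn a(1)])
    show "cpartial j (\<lambda>y. sc (y$k) (H y \<odot> cl_e k)) x = (if k = j then H x \<odot> cl_e k else 0) + sc (x$k) (cpartial j H x \<odot> cl_e k)"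
      by (simp only: cp_coord[OF opn R1 a(2)] cp_R[OF opn a])
  qed
  also have "\<dots> = H x \<odot> cl_e j + Pv x (cpartial j H x)"
    unfolding Pv_def by (rule sum_if_eq)
  finally show ?thesis .
qed

lemma cp_Q:
  assumes a: "Ck 1 \<Omega> H" "x \<in> \<Omega>"
  shows "cpartial j (\<lambda>y. Qv y (H y)) x = cl_e j \<odot> H x + Qv x (cpartial j H x)"
proof -
  have "cpartial j (\<lambda>y. Qv y (H y)) x = (\<Sum>k\<in>UNIV. cpartial j (\<lambda>y. sc (y$k) (cl_e k \<odot> H y)) x)"
    unfolding Qv_def by (rule cp_sum[OF opn], simp, rule Ck_coord[OF opn], rule Ck_L[OF opn], rule a, rule a)
  also have "\<dots> = (\<Sum>k\<in>UNIV. (if k = j then cl_e k \<odot> H x else 0) + sc (x$k) (cl_e k \<odot> cpartial j H x))"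
  proof (intro sum.cong refl)
    fix k
    have R1: "Ck 1 \<Omega> (\<lambda>y. cl_e k \<odot> H y)" by (rule Ck_L[OF opn a(1)])
    show "cpartial j (\<lambda>y. sc (y$k) (cl_e k \<odot> H y)) x = (if k = j then cl_e k \<odot> H x else 0) + sc (x$k) (cl_e k \<odot> cpartial j H x)"
      by (simp only: cp_coord[OF opn R1 a(2)] cp_L[OF opn a])
  qed
  also have "\<dots> = cl_e j \<odot> H x + Qv x (cpartial j H x)"
    unfolding Qv_def by (rule sum_if_eq)
  finally show ?thesis .
qed

lemma cp_T:
  assumes a: "Ck 1 \<Omega> F" "x \<in> \<Omega>"
  shows "cpartial j (\<lambda>y. Tm (F y)) x = Tm (cpartial j F x)"
proof -
  have "cpartial j (\<lambda>y. Tm (F y)) x = (\<Sum>k\<in>UNIV. cpartial j (\<lambda>y. cl_e k \<odot> F y \<odot> cl_e k) x)"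
    unfolding Tm_def by (rule cp_sum[OF opn], simp, rule Ck_R[OF opn], rule Ck_L[OF opn], rule a, rule a)
  also have "\<dots> = (\<Sum>k\<in>UNIV. cl_e k \<odot> cpartial j F x \<odot> cl_e k)"
  proof (intro sum.cong refl)
    fix k
    have R1: "Ck 1 \<Omega> (\<lambda>y. cl_e k \<odot> F y)" by (rule Ck_L[OF opn a(1)])
    show "cpartial j (\<lambda>y. cl_e k \<odot> F y \<odot> cl_e k) x = cl_e k \<odot> cpartial j F x \<odot> cl_e k"
      by (simp only: cp_R[OF opn R1 a(2)] cp_L[OF opn a])
  qed
  finally show ?thesis unfolding Tm_def .
qed

lemma dl_P:
  assumes a: "Ck 1 \<Omega> H" "x \<in> \<Omega>"
  shows "dirac_l (\<lambda>y. Pv y (H y)) x = Tm (H x) + Pv x (dirac_l H x)"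
proof -
  have "dirac_l (\<lambda>y. Pv y (H y)) x = (\<Sum>j\<in>UNIV. cl_e j \<odot> (H x \<odot> cl_e j + Pv x (cpartial j H x)))"
    unfolding dirac_l_def by (simp add: cp_P[OF a])
  also have "\<dots> = (\<Sum>j\<in>UNIV. cl_e j \<odot> H x \<odot> cl_e j) + (\<Sum>j\<in>UNIV. \<Sum>k\<in>UNIV. sc (x$k) (cl_e j \<odot> cpartial j H x \<odot> cl_e k))"
    unfolding Pv_def by (simp add: mult_add_right sum.distrib mult_sum_right mult_sc_right LR)
  also have "\<dots> = Tm (H x) + Pv x (dirac_l H x)"
  proof -
    have "Pv x (dirac_l H x) = (\<Sum>k\<in>UNIV. \<Sum>j\<in>UNIV. sc (x$k) (cl_e j \<odot> cpartial j H x \<odot> cl_e k))"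
      unfolding Pv_def dirac_l_def by (simp add: mult_sum_left sc_sum)
    also have "\<dots> = (\<Sum>j\<in>UNIV. \<Sum>k\<in>UNIV. sc (x$k) (cl_e j \<odot> cpartial j H x \<odot> cl_e k))"
      by (rule sum.swap)
    finally show ?thesis unfolding Tm_def by simp
  qed
  finally show ?thesis .
qed

lemma dr_Q:
  assumes a: "Ck 1 \<Omega> H" "x \<in> \<Omega>"
  shows "dirac_r (\<lambda>y. Qv y (H y)) x = Tm (H x) + Qv x (dirac_r H x)"
proof -
  have "dirac_r (\<lambda>y. Qv y (H y)) x = (\<Sum>j\<in>UNIV. (cl_e j \<odot> H x + Qv x (cpartial j H x)) \<odot> cl_e j)"
    unfolding dirac_r_def by (simp add: cp_Q[OF a])
  also have "\<dots> = (\<Sum>j\<in>UNIV. cl_e j \<odot> H x \<odot> cl_e j) + (\<Sum>j\<in>UNIV. \<Sum>k\<in>UNIV. sc (x$k) (cl_e k \<odot> cpartial j H x \<odot> cl_e j))"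
    unfolding Qv_def by (simp add: mult_add_left sum.distrib mult_sum_left mult_sc_left)
  also have "\<dots> = Tm (H x) + Qv x (dirac_r H x)"
  proof -
    have "Qv x (dirac_r H x) = (\<Sum>k\<in>UNIV. \<Sum>j\<in>UNIV. sc (x$k) (cl_e k \<odot> cpartial j H x \<odot> cl_e j))"
      unfolding Qv_def dirac_r_def by (simp add: mult_sum_right sc_sum LR)
    also have "\<dots> = (\<Sum>j\<in>UNIV. \<Sum>k\<in>UNIV. sc (x$k) (cl_e k \<odot> cpartial j H x \<odot> cl_e j))"
      by (rule sum.swap)
    finally show ?thesis unfolding Tm_def by simp
  qed
  finally show ?thesis .
qed

end


lemma Ck_2_1: "Ck 2 \<Omega> F \<Longrightarrow> Ck 1 \<Omega> F" using Ck_mono[of 1 \<Omega> F] by (simp add: eval_nat_numeral)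
lemma Ck_3_2: "Ck 3 \<Omega> F \<Longrightarrow> Ck 2 \<Omega> F" using Ck_mono[of 2 \<Omega> F] by (simp add: eval_nat_numeral)
lemma Ck_4_3: "Ck 4 \<Omega> F \<Longrightarrow> Ck 3 \<Omega> F" using Ck_mono[of 3 \<Omega> F] by (simp add: eval_nat_numeral)
lemma Ck2_cp: "Ck 2 \<Omega> F \<Longrightarrow> Ck 1 \<Omega> (cpartial j F)" using Ck_cp[of 1 \<Omega> F j] by (simp add: eval_nat_numeral)
lemma Ck3_cp: "Ck 3 \<Omega> F \<Longrightarrow> Ck 2 \<Omega> (cpartial j F)" using Ck_cp[of 2 \<Omega> F j] by (simp add: eval_nat_numeral)

lemma sum_delta_fun: "(\<Sum>j\<in>UNIV. if i = j then f j else (0::'n::{finite,linorder} clifford)) = f i"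
  for f :: "'n::{finite,linorder} \<Rightarrow> 'n clifford"
  by (simp add: sum.delta')

context
  fixes \<Omega> :: "(real ^ 'n::{finite,linorder}) set"
  assumes opn: "open \<Omega>"
begin

lemma exp_ll:
  assumes a: "Ck 2 \<Omega> F" "x \<in> \<Omega>"
  shows "dirac_l (dirac_l F) x = (\<Sum>i\<in>UNIV. \<Sum>j\<in>UNIV. cl_e i \<odot> (cl_e j \<odot> cpartial i (cpartial j F) x))"
proof -
  have "cpartial i (dirac_l F) x = (\<Sum>j\<in>UNIV. cl_e j \<odot> cpartial i (cpartial j F) x)" for i
  proof -
    have "cpartial i (dirac_l F) x = (\<Sum>j\<in>UNIV. cpartial i (\<lambda>y. cl_e j \<odot> cpartial j F y) x)"
      unfolding dl_eq by (rule cp_sum[OF opn], simp, rule Ck_L[OF opn], rule Ck2_cp[OF a(1)], rule a(2))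
    also have "\<dots> = (\<Sum>j\<in>UNIV. cl_e j \<odot> cpartial i (cpartial j F) x)"
      by (intro sum.cong refl cp_L[OF opn] Ck2_cp[OF a(1)] a(2))
    finally show ?thesis .
  qed
  thus ?thesis unfolding dirac_l_def[of "dirac_l F"] by (simp add: mult_sum_right)
qed

lemma exp_rr:
  assumes a: "Ck 2 \<Omega> F" "x \<in> \<Omega>"
  shows "dirac_r (dirac_r F) x = (\<Sum>i\<in>UNIV. \<Sum>j\<in>UNIV. (cpartial i (cpartial j F) x \<odot> cl_e j) \<odot> cl_e i)"
proof -
  have "cpartial i (dirac_r F) x = (\<Sum>j\<in>UNIV. cpartial i (cpartial j F) x \<odot> cl_e j)" for i
  proof -
    have "cpartial i (dirac_r F) x = (\<Sum>j\<in>UNIV. cpartial i (\<lambda>y. cpartial j F y \<odot> cl_e j) x)"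
      unfolding dr_eq by (rule cp_sum[OF opn], simp, rule Ck_R[OF opn], rule Ck2_cp[OF a(1)], rule a(2))
    also have "\<dots> = (\<Sum>j\<in>UNIV. cpartial i (cpartial j F) x \<odot> cl_e j)"
      by (intro sum.cong refl cp_R[OF opn] Ck2_cp[OF a(1)] a(2))
    finally show ?thesis .
  qed
  thus ?thesis unfolding dirac_r_def[of "dirac_r F"] by (simp add: mult_sum_left)
qed

lemma exp_lr:
  assumes a: "Ck 2 \<Omega> F" "x \<in> \<Omega>"
  shows "dirac_l (dirac_r F) x = (\<Sum>i\<in>UNIV. \<Sum>j\<in>UNIV. cl_e i \<odot> (cpartial i (cpartial j F) x \<odot> cl_e j))"
proof -
  have "cpartial i (dirac_r F) x = (\<Sum>j\<in>UNIV. cpartial i (cpartial j F) x \<odot> cl_e j)" for i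
  proof -
    have "cpartial i (dirac_r F) x = (\<Sum>j\<in>UNIV. cpartial i (\<lambda>y. cpartial j F y \<odot> cl_e j) x)"
      unfolding dr_eq by (rule cp_sum[OF opn], simp, rule Ck_R[OF opn], rule Ck2_cp[OF a(1)], rule a(2))
    also have "\<dots> = (\<Sum>j\<in>UNIV. cpartial i (cpartial j F) x \<odot> cl_e j)"
      by (intro sum.cong refl cp_R[OF opn] Ck2_cp[OF a(1)] a(2))
    finally show ?thesis .
  qed
  thus ?thesis unfolding dirac_l_def[of "dirac_r F"] by (simp add: mult_sum_right)
qed

lemma exp_rl:
  assumes a: "Ck 2 \<Omega> F" "x \<in> \<Omega>"
  shows "dirac_r (dirac_l F) x = (\<Sum>j\<in>UNIV. \<Sum>i\<in>UNIV. (cl_e i \<odot> cpartial j (cpartial i F) x) \<odot> cl_e j)"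
proof -
  have "cpartial j (dirac_l F) x = (\<Sum>i\<in>UNIV. cl_e i \<odot> cpartial j (cpartial i F) x)" for j
  proof -
    have "cpartial j (dirac_l F) x = (\<Sum>i\<in>UNIV. cpartial j (\<lambda>y. cl_e i \<odot> cpartial i F y) x)"
      unfolding dl_eq by (rule cp_sum[OF opn], simp, rule Ck_L[OF opn], rule Ck2_cp[OF a(1)], rule a(2))
    also have "\<dots> = (\<Sum>i\<in>UNIV. cl_e i \<odot> cpartial j (cpartial i F) x)"
      by (intro sum.cong refl cp_L[OF opn] Ck2_cp[OF a(1)] a(2))
    finally show ?thesis .
  qed
  thus ?thesis unfolding dirac_r_def[of "dirac_l F"] by (simp add: mult_sum_left)
qed

lemma comm:
  assumes a: "Ck 2 \<Omega> F" "x \<in> \<Omega>"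
  shows "dirac_l (dirac_r F) x = dirac_r (dirac_l F) x"
proof -
  have "dirac_r (dirac_l F) x = (\<Sum>i\<in>UNIV. \<Sum>j\<in>UNIV. (cl_e i \<odot> cpartial j (cpartial i F) x) \<odot> cl_e j)"
    unfolding exp_rl[OF a] by (rule sum.swap)
  also have "\<dots> = (\<Sum>i\<in>UNIV. \<Sum>j\<in>UNIV. cl_e i \<odot> (cpartial i (cpartial j F) x \<odot> cl_e j))"
    by (intro sum.cong refl) (simp add: cp_swap[OF opn a] LR)
  finally show ?thesis unfolding exp_lr[OF a] by (simp add: eval_nat_numeral)
qed

lemma infra_eq:
  assumes a: "Ck 2 \<Omega> F" "x \<in> \<Omega>"
  shows "(\<Sum>i\<in>UNIV. \<Sum>j\<in>UNIV. cl_e i \<odot> cpartial i (cpartial j F) x \<odot> cl_e j) = dirac_l (dirac_r F) x"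
  unfolding exp_lr[OF a] by (simp add: LR)

lemma half: "S + S = sc (-2) L \<Longrightarrow> S = - (L::'n clifford)"
proof (rule ext)
  fix C assume "S + S = sc (-2) L"
  hence "S C + S C = -2 * L C" by (metis plus_fun_apply sc_apply)
  thus "S C = (- L) C" by (simp add: eval_nat_numeral)
qed

lemma DD:
  assumes a: "Ck 2 \<Omega> F" "x \<in> \<Omega>"
  shows "dirac_l (dirac_l F) x = - laplace F x"
proof -
  define b where "b i j = cpartial i (cpartial j F) x" for i j
  have sym: "b i j = b j i" for i j unfolding b_def by (rule cp_swap[OF opn a])
  let ?S = "\<Sum>i\<in>UNIV. \<Sum>j\<in>UNIV. cl_e i \<odot> (cl_e j \<odot> b i j)"
  have S: "dirac_l (dirac_l F) x = ?S" unfolding exp_ll[OF a] b_def ..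
  have "?S = (\<Sum>j\<in>UNIV. \<Sum>i\<in>UNIV. cl_e i \<odot> (cl_e j \<odot> b i j))" by (rule sum.swap)
  also have "\<dots> = (\<Sum>i\<in>UNIV. \<Sum>j\<in>UNIV. cl_e j \<odot> (cl_e i \<odot> b i j))"
    by (intro sum.cong refl) (simp add: sym)
  finally have S2: "?S = (\<Sum>i\<in>UNIV. \<Sum>j\<in>UNIV. cl_e j \<odot> (cl_e i \<odot> b i j))" .
  have "?S + ?S = (\<Sum>i\<in>UNIV. \<Sum>j\<in>UNIV. cl_e i \<odot> (cl_e j \<odot> b i j) + cl_e j \<odot> (cl_e i \<odot> b i j))"
    by (subst (2) S2) (simp add: sum.distrib)
  also have "\<dots> = (\<Sum>i\<in>UNIV. \<Sum>j\<in>UNIV. if i = j then sc (-2) (b i j) else 0)"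
    by (intro sum.cong refl) (simp add: LL)
  also have "\<dots> = (\<Sum>i\<in>UNIV. sc (-2) (b i i))"
    by (intro sum.cong refl) (rule sum_delta_fun)
  also have "\<dots> = sc (-2) (laplace F x)"
    unfolding laplace_def b_def by (simp add: sc_sum)
  finally show ?thesis unfolding S by (rule half)
qed

lemma DDr:
  assumes a: "Ck 2 \<Omega> F" "x \<in> \<Omega>"
  shows "dirac_r (dirac_r F) x = - laplace F x"
proof -
  define b where "b i j = cpartial i (cpartial j F) x" for i j
  have sym: "b i j = b j i" for i j unfolding b_def by (rule cp_swap[OF opn a])
  let ?S = "\<Sum>i\<in>UNIV. \<Sum>j\<in>UNIV. (b i j \<odot> cl_e j) \<odot> cl_e i"
  have S: "dirac_r (dirac_r F) x = ?S" unfolding exp_rr[OF a] b_def ..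
  have "?S = (\<Sum>j\<in>UNIV. \<Sum>i\<in>UNIV. (b i j \<odot> cl_e j) \<odot> cl_e i)" by (rule sum.swap)
  also have "\<dots> = (\<Sum>i\<in>UNIV. \<Sum>j\<in>UNIV. (b i j \<odot> cl_e i) \<odot> cl_e j)"
    by (intro sum.cong refl) (simp add: sym)
  finally have S2: "?S = (\<Sum>i\<in>UNIV. \<Sum>j\<in>UNIV. (b i j \<odot> cl_e i) \<odot> cl_e j)" .
  have "?S + ?S = (\<Sum>i\<in>UNIV. \<Sum>j\<in>UNIV. (b i j \<odot> cl_e j) \<odot> cl_e i + (b i j \<odot> cl_e i) \<odot> cl_e j)"
    by (subst (2) S2) (simp add: sum.distrib)
  also have "\<dots> = (\<Sum>i\<in>UNIV. \<Sum>j\<in>UNIV. if i = j then sc (-2) (b i j) else 0)"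
    by (intro sum.cong refl) (simp add: RR)
  also have "\<dots> = (\<Sum>i\<in>UNIV. sc (-2) (b i i))"
    by (intro sum.cong refl) (rule sum_delta_fun)
  also have "\<dots> = sc (-2) (laplace F x)"
    unfolding laplace_def b_def by (simp add: sc_sum)
  finally show ?thesis unfolding S by (rule half)
qed

end


context
  fixes \<Omega> :: "(real ^ 'n::{finite,linorder}) set"
  assumes opn: "open \<Omega>"
begin

lemma dl_T:
  assumes a: "Ck 1 \<Omega> F" "x \<in> \<Omega>"
  shows "dirac_l (\<lambda>y. Tm (F y)) x + Tm (dirac_l F x) = sc (-2) (dirac_r F x)"
proof -
  define b where "b i = cpartial i F x" for i
  have e1: "dirac_l (\<lambda>y. Tm (F y)) x = (\<Sum>i\<in>UNIV. \<Sum>j\<in>UNIV. cl_e i \<odot> (cl_e j \<odot> b i \<odot> cl_e j))"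
    unfolding dirac_l_def b_def cp_T[OF opn a] by (simp add: Tm_def mult_sum_right)
  have "Tm (dirac_l F x) = (\<Sum>j\<in>UNIV. \<Sum>i\<in>UNIV. (cl_e j \<odot> (cl_e i \<odot> b i)) \<odot> cl_e j)"
    unfolding Tm_def dirac_l_def b_def by (simp add: mult_sum_right mult_sum_left)
  also have "\<dots> = (\<Sum>i\<in>UNIV. \<Sum>j\<in>UNIV. (cl_e j \<odot> (cl_e i \<odot> b i)) \<odot> cl_e j)" by (rule sum.swap)
  finally have e2: "Tm (dirac_l F x) = \<dots>" .
  have t: "cl_e i \<odot> (cl_e j \<odot> c \<odot> cl_e j) + (cl_e j \<odot> (cl_e i \<odot> c)) \<odot> cl_e j =
      (if i = j then sc (-2) (c \<odot> cl_e j) else 0)" for i j c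
  proof -
    have "cl_e i \<odot> (cl_e j \<odot> c \<odot> cl_e j) = (cl_e i \<odot> (cl_e j \<odot> c)) \<odot> cl_e j"
      by (rule LR[symmetric])
    hence "cl_e i \<odot> (cl_e j \<odot> c \<odot> cl_e j) + (cl_e j \<odot> (cl_e i \<odot> c)) \<odot> cl_e j =
      (cl_e i \<odot> (cl_e j \<odot> c) + cl_e j \<odot> (cl_e i \<odot> c)) \<odot> cl_e j" by (simp add: mult_add_left)
    also have "\<dots> = (if i = j then sc (-2) (c \<odot> cl_e j) else 0)"
      by (simp add: LL mult_sc_left)
    finally show ?thesis .
  qed
  have "dirac_l (\<lambda>y. Tm (F y)) x + Tm (dirac_l F x) =
      (\<Sum>i\<in>UNIV. \<Sum>j\<in>UNIV. cl_e i \<odot> (cl_e j \<odot> b i \<odot> cl_e j) + (cl_e j \<odot> (cl_e i \<odot> b i)) \<odot> cl_e j)"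
    unfolding e1 e2 by (simp add: sum.distrib)
  also have "\<dots> = (\<Sum>i\<in>UNIV. \<Sum>j\<in>UNIV. if i = j then sc (-2) (b i \<odot> cl_e j) else 0)"
    by (simp only: t)
  also have "\<dots> = (\<Sum>i\<in>UNIV. sc (-2) (b i \<odot> cl_e i))"
    by (intro sum.cong refl) (rule sum_delta_fun)
  also have "\<dots> = sc (-2) (dirac_r F x)"
    unfolding dirac_r_def b_def by (simp add: sc_sum)
  finally show ?thesis .
qed

lemma dr_T:
  assumes a: "Ck 1 \<Omega> F" "x \<in> \<Omega>"
  shows "dirac_r (\<lambda>y. Tm (F y)) x + Tm (dirac_r F x) = sc (-2) (dirac_l F x)"
proof -
  define b where "b i = cpartial i F x" for i
  have e1: "dirac_r (\<lambda>y. Tm (F y)) x = (\<Sum>i\<in>UNIV. \<Sum>j\<in>UNIV. (cl_e j \<odot> b i \<odot> cl_e j) \<odot> cl_e i)"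
    unfolding dirac_r_def b_def cp_T[OF opn a] by (simp add: Tm_def mult_sum_left)
  have "Tm (dirac_r F x) = (\<Sum>j\<in>UNIV. \<Sum>i\<in>UNIV. (cl_e j \<odot> b i \<odot> cl_e i) \<odot> cl_e j)"
    unfolding Tm_def dirac_r_def b_def by (simp add: mult_sum_right mult_sum_left LR)
  also have "\<dots> = (\<Sum>i\<in>UNIV. \<Sum>j\<in>UNIV. (cl_e j \<odot> b i \<odot> cl_e i) \<odot> cl_e j)" by (rule sum.swap)
  finally have e2: "Tm (dirac_r F x) = \<dots>" .
  have t: "(cl_e j \<odot> c \<odot> cl_e j) \<odot> cl_e i + (cl_e j \<odot> c \<odot> cl_e i) \<odot> cl_e j =
      (if i = j then sc (-2) (cl_e j \<odot> c) else 0)" for i j c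
    using RR[of "cl_e j \<odot> c" j i] by (auto simp: eq_commute)
  have "dirac_r (\<lambda>y. Tm (F y)) x + Tm (dirac_r F x) =
      (\<Sum>i\<in>UNIV. \<Sum>j\<in>UNIV. (cl_e j \<odot> b i \<odot> cl_e j) \<odot> cl_e i + (cl_e j \<odot> b i \<odot> cl_e i) \<odot> cl_e j)"
    unfolding e1 e2 by (simp add: sum.distrib)
  also have "\<dots> = (\<Sum>i\<in>UNIV. \<Sum>j\<in>UNIV. if i = j then sc (-2) (cl_e j \<odot> b i) else 0)"
    by (simp only: t)
  also have "\<dots> = (\<Sum>i\<in>UNIV. sc (-2) (cl_e i \<odot> b i))"
    by (intro sum.cong refl) (rule sum_delta_fun)
  also have "\<dots> = sc (-2) (dirac_l F x)"
    unfolding dirac_l_def b_def by (simp add: sc_sum)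
  finally show ?thesis .
qed

lemma lap_T:
  assumes a: "Ck 2 \<Omega> F" "x \<in> \<Omega>"
  shows "laplace (\<lambda>y. Tm (F y)) x = Tm (laplace F x)"
proof -
  have "cpartial j (cpartial j (\<lambda>y. Tm (F y))) x = Tm (cpartial j (cpartial j F) x)" for j
  proof -
    have "cpartial j (cpartial j (\<lambda>y. Tm (F y))) x = cpartial j (\<lambda>y. Tm (cpartial j F y)) x"
      by (rule cp_loc[OF opn _ a(2)]) (simp add: cp_T[OF opn Ck_2_1[OF a(1)]])
    also have "\<dots> = Tm (cpartial j (cpartial j F) x)"
      by (rule cp_T[OF opn Ck2_cp[OF a(1)] a(2)])
    finally show ?thesis .
  qed
  thus ?thesis unfolding laplace_def by (simp add: Tm_sum)
qed

lemma lap_P: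
  assumes a: "Ck 2 \<Omega> H" "x \<in> \<Omega>"
  shows "laplace (\<lambda>y. Pv y (H y)) x = sc 2 (dirac_r H x) + Pv x (laplace H x)"
proof -
  have H1: "Ck 1 \<Omega> H" by (rule Ck_2_1[OF a(1)])
  have "cpartial j (cpartial j (\<lambda>y. Pv y (H y))) x =
     cpartial j H x \<odot> cl_e j + (cpartial j H x \<odot> cl_e j + Pv x (cpartial j (cpartial j H) x))" for j
  proof -
    have "cpartial j (cpartial j (\<lambda>y. Pv y (H y))) x =
        cpartial j (\<lambda>y. H y \<odot> cl_e j + Pv y (cpartial j H y)) x"
      by (rule cp_loc[OF opn _ a(2)]) (simp add: cp_P[OF opn H1])
    also have "\<dots> = cpartial j (\<lambda>y. H y \<odot> cl_e j) x + cpartial j (\<lambda>y. Pv y (cpartial j H y)) x"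
      by (rule cp_add[OF opn Ck_R[OF opn H1] Ck_P[OF opn Ck2_cp[OF a(1)]] a(2)])
    also have "\<dots> = cpartial j H x \<odot> cl_e j + (cpartial j H x \<odot> cl_e j + Pv x (cpartial j (cpartial j H) x))"
      by (simp add: cp_R[OF opn H1 a(2)] cp_P[OF opn Ck2_cp[OF a(1)] a(2)])
    finally show ?thesis .
  qed
  hence "laplace (\<lambda>y. Pv y (H y)) x =
     (\<Sum>j\<in>UNIV. cpartial j H x \<odot> cl_e j) + (\<Sum>j\<in>UNIV. cpartial j H x \<odot> cl_e j) + (\<Sum>j\<in>UNIV. Pv x (cpartial j (cpartial j H) x))"
    unfolding laplace_def by (simp add: sum.distrib add.assoc sum_distrib_left)
  also have "\<dots> = sc 2 (dirac_r H x) + Pv x (laplace H x)"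
    unfolding dirac_r_def laplace_def by (simp add: Pv_sum sc2)
  finally show ?thesis .
qed

lemma lap_Q:
  assumes a: "Ck 2 \<Omega> H" "x \<in> \<Omega>"
  shows "laplace (\<lambda>y. Qv y (H y)) x = sc 2 (dirac_l H x) + Qv x (laplace H x)"
proof -
  have H1: "Ck 1 \<Omega> H" by (rule Ck_2_1[OF a(1)])
  have "cpartial j (cpartial j (\<lambda>y. Qv y (H y))) x =
     cl_e j \<odot> cpartial j H x + (cl_e j \<odot> cpartial j H x + Qv x (cpartial j (cpartial j H) x))" for j
  proof -
    have "cpartial j (cpartial j (\<lambda>y. Qv y (H y))) x =
        cpartial j (\<lambda>y. cl_e j \<odot> H y + Qv y (cpartial j H y)) x"
      by (rule cp_loc[OF opn _ a(2)]) (simp add: cp_Q[OF opn H1])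
    also have "\<dots> = cpartial j (\<lambda>y. cl_e j \<odot> H y) x + cpartial j (\<lambda>y. Qv y (cpartial j H y)) x"
      by (rule cp_add[OF opn Ck_L[OF opn H1] Ck_Q[OF opn Ck2_cp[OF a(1)]] a(2)])
    also have "\<dots> = cl_e j \<odot> cpartial j H x + (cl_e j \<odot> cpartial j H x + Qv x (cpartial j (cpartial j H) x))"
      by (simp add: cp_L[OF opn H1 a(2)] cp_Q[OF opn Ck2_cp[OF a(1)] a(2)])
    finally show ?thesis .
  qed
  hence "laplace (\<lambda>y. Qv y (H y)) x =
     (\<Sum>j\<in>UNIV. cl_e j \<odot> cpartial j H x) + (\<Sum>j\<in>UNIV. cl_e j \<odot> cpartial j H x) + (\<Sum>j\<in>UNIV. Qv x (cpartial j (cpartial j H) x))"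
    unfolding laplace_def by (simp add: sum.distrib add.assoc sum_distrib_left)
  also have "\<dots> = sc 2 (dirac_l H x) + Qv x (laplace H x)"
    unfolding dirac_l_def laplace_def by (simp add: Qv_sum sc2)
  finally show ?thesis .
qed

end


context
  fixes \<Omega> :: "(real ^ 'n::{finite,linorder}) set" and f :: "real ^ 'n::{finite,linorder} \<Rightarrow> 'n clifford"
  assumes opn: "open \<Omega>" and f4: "Ck 4 \<Omega> f"
begin

lemma f3: "Ck 3 \<Omega> f" by (rule Ck_4_3[OF f4])
lemma f2: "Ck 2 \<Omega> f" by (rule Ck_3_2[OF f3])
lemma f1: "Ck 1 \<Omega> f" by (rule Ck_2_1[OF f2])

lemma N4: "Ck 4 \<Omega> F \<Longrightarrow> Ck (Suc 3) \<Omega> F" by (simp add: eval_nat_numeral)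
lemma N3: "Ck 3 \<Omega> F \<Longrightarrow> Ck (Suc 2) \<Omega> F" by (simp add: eval_nat_numeral)
lemma N2: "Ck 2 \<Omega> F \<Longrightarrow> Ck (Suc 1) \<Omega> F" by (simp add: eval_nat_numeral)
lemma N2': "Ck 2 \<Omega> F \<Longrightarrow> Ck (Suc (Suc 0)) \<Omega> F" by (simp add: eval_nat_numeral)

lemma dlf3: "Ck 3 \<Omega> (dirac_l f)" by (rule Ck_dl[OF opn N4[OF f4]])
lemma drf3: "Ck 3 \<Omega> (dirac_r f)" by (rule Ck_dr[OF opn N4[OF f4]])
lemma dlf2: "Ck 2 \<Omega> (dirac_l f)" by (rule Ck_3_2[OF dlf3])
lemma drf2: "Ck 2 \<Omega> (dirac_r f)" by (rule Ck_3_2[OF drf3])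
lemma dlf1: "Ck 1 \<Omega> (dirac_l f)" by (rule Ck_2_1[OF dlf2])
lemma drf1: "Ck 1 \<Omega> (dirac_r f)" by (rule Ck_2_1[OF drf2])
lemma dldlf2: "Ck 2 \<Omega> (dirac_l (dirac_l f))" by (rule Ck_dl[OF opn N3[OF dlf3]])
lemma dldlf1: "Ck 1 \<Omega> (dirac_l (dirac_l f))" by (rule Ck_2_1[OF dldlf2])
lemma drdrf2: "Ck 2 \<Omega> (dirac_r (dirac_r f))" by (rule Ck_dr[OF opn N3[OF drf3]])
lemma drdrf1: "Ck 1 \<Omega> (dirac_r (dirac_r f))" by (rule Ck_2_1[OF drdrf2])
lemma lapf2: "Ck 2 \<Omega> (laplace f)" using Ck_lap[OF opn, of 2 f] f4 by (simp add: eval_nat_numeral)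
lemma lapf1: "Ck 1 \<Omega> (laplace f)" by (rule Ck_2_1[OF lapf2])

lemma c1_formula:
  assumes x: "x \<in> \<Omega>"
  shows "dirac_l (dirac_l (dirac_l (\<lambda>y. f y \<odot> cl_vec y))) x =
    sc (-2) (dirac_l (dirac_r f) x) + (Tm (dirac_l (dirac_l f) x) + Pv x (dirac_l (dirac_l (dirac_l f)) x))"
proof -
  have e0: "(\<lambda>y. f y \<odot> cl_vec y) = (\<lambda>y. Pv y (f y))" by (simp add: vec_right)
  have s1: "\<forall>y\<in>\<Omega>. dirac_l (\<lambda>y. Pv y (f y)) y = Tm (f y) + Pv y (dirac_l f y)"
    using dl_P[OF opn f1] by blast
  have s2: "\<forall>y\<in>\<Omega>. dirac_l (dirac_l (\<lambda>y. Pv y (f y))) y = sc (-2) (dirac_r f y) + Pv y (dirac_l (dirac_l f) y)"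
  proof
    fix y assume y: "y \<in> \<Omega>"
    have "dirac_l (dirac_l (\<lambda>y. Pv y (f y))) y = dirac_l (\<lambda>z. Tm (f z) + Pv z (dirac_l f z)) y"
      by (rule dl_loc[OF opn s1 y])
    also have "\<dots> = dirac_l (\<lambda>z. Tm (f z)) y + dirac_l (\<lambda>z. Pv z (dirac_l f z)) y"
      by (rule dl_add[OF opn Ck_T[OF opn f1] Ck_P[OF opn dlf1] y])
    also have "\<dots> = dirac_l (\<lambda>z. Tm (f z)) y + (Tm (dirac_l f y) + Pv y (dirac_l (dirac_l f) y))"
      by (simp add: dl_P[OF opn dlf1 y])
    also have "\<dots> = sc (-2) (dirac_r f y) + Pv y (dirac_l (dirac_l f) y)"
      using dl_T[OF opn f1 y] by (simp add: add.assoc[symmetric])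
    finally show "dirac_l (dirac_l (\<lambda>y. Pv y (f y))) y = sc (-2) (dirac_r f y) + Pv y (dirac_l (dirac_l f) y)" .
  qed
  have "dirac_l (dirac_l (dirac_l (\<lambda>y. Pv y (f y)))) x =
      dirac_l (\<lambda>z. sc (-2) (dirac_r f z) + Pv z (dirac_l (dirac_l f) z)) x"
    by (rule dl_loc[OF opn s2 x])
  also have "\<dots> = dirac_l (\<lambda>z. sc (-2) (dirac_r f z)) x + dirac_l (\<lambda>z. Pv z (dirac_l (dirac_l f) z)) x"
    by (rule dl_add[OF opn Ck_sc[OF opn drf1] Ck_P[OF opn dldlf1] x])
  also have "\<dots> = sc (-2) (dirac_l (dirac_r f) x) + (Tm (dirac_l (dirac_l f) x) + Pv x (dirac_l (dirac_l (dirac_l f)) x))"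
    by (simp add: dl_sc[OF opn drf1 x] dl_P[OF opn dldlf1 x])
  finally show ?thesis unfolding e0 .
qed

lemma c2_formula:
  assumes x: "x \<in> \<Omega>"
  shows "dirac_r (dirac_r (dirac_r (\<lambda>y. cl_vec y \<odot> f y))) x =
    sc (-2) (dirac_r (dirac_l f) x) + (Tm (dirac_r (dirac_r f) x) + Qv x (dirac_r (dirac_r (dirac_r f)) x))"
proof -
  have e0: "(\<lambda>y. cl_vec y \<odot> f y) = (\<lambda>y. Qv y (f y))" by (simp add: vec_left)
  have s1: "\<forall>y\<in>\<Omega>. dirac_r (\<lambda>y. Qv y (f y)) y = Tm (f y) + Qv y (dirac_r f y)"
    using dr_Q[OF opn f1] by blast
  have s2: "\<forall>y\<in>\<Omega>. dirac_r (dirac_r (\<lambda>y. Qv y (f y))) y = sc (-2) (dirac_l f y) + Qv y (dirac_r (dirac_r f) y)"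
  proof
    fix y assume y: "y \<in> \<Omega>"
    have "dirac_r (dirac_r (\<lambda>y. Qv y (f y))) y = dirac_r (\<lambda>z. Tm (f z) + Qv z (dirac_r f z)) y"
      by (rule dr_loc[OF opn s1 y])
    also have "\<dots> = dirac_r (\<lambda>z. Tm (f z)) y + dirac_r (\<lambda>z. Qv z (dirac_r f z)) y"
      by (rule dr_add[OF opn Ck_T[OF opn f1] Ck_Q[OF opn drf1] y])
    also have "\<dots> = dirac_r (\<lambda>z. Tm (f z)) y + (Tm (dirac_r f y) + Qv y (dirac_r (dirac_r f) y))"
      by (simp add: dr_Q[OF opn drf1 y])
    also have "\<dots> = sc (-2) (dirac_l f y) + Qv y (dirac_r (dirac_r f) y)"
      using dr_T[OF opn f1 y] by (simp add: add.assoc[symmetric])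
    finally show "dirac_r (dirac_r (\<lambda>y. Qv y (f y))) y = sc (-2) (dirac_l f y) + Qv y (dirac_r (dirac_r f) y)" .
  qed
  have "dirac_r (dirac_r (dirac_r (\<lambda>y. Qv y (f y)))) x =
      dirac_r (\<lambda>z. sc (-2) (dirac_l f z) + Qv z (dirac_r (dirac_r f) z)) x"
    by (rule dr_loc[OF opn s2 x])
  also have "\<dots> = dirac_r (\<lambda>z. sc (-2) (dirac_l f z)) x + dirac_r (\<lambda>z. Qv z (dirac_r (dirac_r f) z)) x"
    by (rule dr_add[OF opn Ck_sc[OF opn dlf1] Ck_Q[OF opn drdrf1] x])
  also have "\<dots> = sc (-2) (dirac_r (dirac_l f) x) + (Tm (dirac_r (dirac_r f) x) + Qv x (dirac_r (dirac_r (dirac_r f)) x))"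
    by (simp add: dr_sc[OF opn dlf1 x] dr_Q[OF opn drdrf1 x])
  finally show ?thesis unfolding e0 .
qed


lemma c3_formula:
  assumes x: "x \<in> \<Omega>"
  shows "laplace (laplace (\<lambda>y. cl_vec y \<odot> f y \<odot> cl_vec y)) x =
    sc 2 (Tm (laplace f x))
    + sc 2 (sc 2 (dirac_l (dirac_r f) x) + Qv x (laplace (dirac_r f) x))
    + sc 2 (sc 2 (dirac_r (dirac_l f) x) + Pv x (laplace (dirac_l f) x))
    + (sc 2 (Tm (laplace f x) + Qv x (dirac_r (laplace f) x))
       + Pv x (sc 2 (dirac_l (laplace f) x) + Qv x (laplace (laplace f) x)))"
proof -
  have e0: "(\<lambda>y. cl_vec y \<odot> f y \<odot> cl_vec y) = (\<lambda>y. Pv y (Qv y (f y)))" by (simp add: vec_left vec_right)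
  have H2: "Ck 2 \<Omega> (\<lambda>y. Qv y (f y))" by (rule Ck_Q[OF opn f2])
  have s1: "\<forall>y\<in>\<Omega>. laplace (\<lambda>y. Pv y (Qv y (f y))) y =
      sc 2 (Tm (f y)) + sc 2 (Qv y (dirac_r f y)) + sc 2 (Pv y (dirac_l f y)) + Pv y (Qv y (laplace f y))"
  proof
    fix y assume y: "y \<in> \<Omega>"
    show "laplace (\<lambda>y. Pv y (Qv y (f y))) y =
      sc 2 (Tm (f y)) + sc 2 (Qv y (dirac_r f y)) + sc 2 (Pv y (dirac_l f y)) + Pv y (Qv y (laplace f y))"
      by (simp add: lap_P[OF opn H2 y] dr_Q[OF opn f1 y] lap_Q[OF opn f2 y] sc_add Pv_add Pv_sc add.assoc)
  qed
  have V1: "Ck 2 \<Omega> (\<lambda>y. sc 2 (Tm (f y)))" by (rule Ck_sc[OF opn Ck_T[OF opn f2]])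
  have V2: "Ck 2 \<Omega> (\<lambda>y. sc 2 (Qv y (dirac_r f y)))" by (rule Ck_sc[OF opn Ck_Q[OF opn drf2]])
  have V3: "Ck 2 \<Omega> (\<lambda>y. sc 2 (Pv y (dirac_l f y)))" by (rule Ck_sc[OF opn Ck_P[OF opn dlf2]])
  have V4: "Ck 2 \<Omega> (\<lambda>y. Pv y (Qv y (laplace f y)))" by (rule Ck_P[OF opn Ck_Q[OF opn lapf2]])
  have V12: "Ck 2 \<Omega> (\<lambda>y. sc 2 (Tm (f y)) + sc 2 (Qv y (dirac_r f y)))" by (rule Ck_add[OF opn V1 V2])
  have V123: "Ck 2 \<Omega> (\<lambda>y. sc 2 (Tm (f y)) + sc 2 (Qv y (dirac_r f y)) + sc 2 (Pv y (dirac_l f y)))"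
    by (rule Ck_add[OF opn V12 V3])
  have "laplace (laplace (\<lambda>y. Pv y (Qv y (f y)))) x =
    laplace (\<lambda>y. sc 2 (Tm (f y)) + sc 2 (Qv y (dirac_r f y)) + sc 2 (Pv y (dirac_l f y)) + Pv y (Qv y (laplace f y))) x"
    by (rule lap_loc[OF opn s1 x])
  also have "\<dots> = laplace (\<lambda>y. sc 2 (Tm (f y))) x + laplace (\<lambda>y. sc 2 (Qv y (dirac_r f y))) x
     + laplace (\<lambda>y. sc 2 (Pv y (dirac_l f y))) x + laplace (\<lambda>y. Pv y (Qv y (laplace f y))) x"
    by (simp only: lap_add[OF opn V123 V4 x] lap_add[OF opn V12 V3 x] lap_add[OF opn V1 V2 x])
  also have "\<dots> = sc 2 (Tm (laplace f x))
    + sc 2 (sc 2 (dirac_l (dirac_r f) x) + Qv x (laplace (dirac_r f) x))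
    + sc 2 (sc 2 (dirac_r (dirac_l f) x) + Pv x (laplace (dirac_l f) x))
    + (sc 2 (Tm (laplace f x) + Qv x (dirac_r (laplace f) x))
       + Pv x (sc 2 (dirac_l (laplace f) x) + Qv x (laplace (laplace f) x)))"
    by (simp only: lap_sc[OF opn Ck_T[OF opn f2] x] lap_T[OF opn f2 x]
        lap_sc[OF opn Ck_Q[OF opn drf2] x] lap_Q[OF opn drf2 x]
        lap_sc[OF opn Ck_P[OF opn dlf2] x] lap_P[OF opn dlf2 x]
        lap_P[OF opn Ck_Q[OF opn lapf2] x] dr_Q[OF opn lapf1 x] lap_Q[OF opn lapf2 x])
  finally show ?thesis unfolding e0 .
qed


lemma harm_vals:
  assumes L0: "\<forall>y\<in>\<Omega>. laplace f y = 0" and x: "x \<in> \<Omega>"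
  shows "dirac_l (dirac_l f) x = 0" "dirac_r (dirac_r f) x = 0"
    "dirac_l (dirac_l (dirac_l f)) x = 0" "dirac_r (dirac_r (dirac_r f)) x = 0"
    "laplace (dirac_r f) x = 0" "laplace (dirac_l f) x = 0"
    "dirac_r (laplace f) x = 0" "dirac_l (laplace f) x = 0" "laplace (laplace f) x = 0"
    "laplace f x = 0"
proof -
  have DL0: "\<forall>y\<in>\<Omega>. dirac_l (dirac_l f) y = 0" using DD[OF opn f2] L0 by simp
  have DR0: "\<forall>y\<in>\<Omega>. dirac_r (dirac_r f) y = 0" using DDr[OF opn f2] L0 by simp
  show "dirac_l (dirac_l f) x = 0" "dirac_r (dirac_r f) x = 0" using DL0 DR0 x by auto
  show "dirac_l (dirac_l (dirac_l f)) x = 0" by (rule dl_zero[OF opn DL0 x])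
  show "dirac_r (dirac_r (dirac_r f)) x = 0" by (rule dr_zero[OF opn DR0 x])
  have C1: "\<forall>y\<in>\<Omega>. dirac_l (dirac_r f) y = dirac_r (dirac_l f) y" using comm[OF opn f2] by blast
  have "dirac_l (dirac_l (dirac_r f)) x = dirac_l (dirac_r (dirac_l f)) x" by (rule dl_loc[OF opn C1 x])
  also have "\<dots> = dirac_r (dirac_l (dirac_l f)) x" by (rule comm[OF opn dlf2 x])
  also have "\<dots> = 0" by (rule dr_zero[OF opn DL0 x])
  finally show "laplace (dirac_r f) x = 0" using DD[OF opn drf2 x] by simp
  have C2: "\<forall>y\<in>\<Omega>. dirac_r (dirac_l f) y = dirac_l (dirac_r f) y" using C1 by simp
  have "dirac_r (dirac_r (dirac_l f)) x = dirac_r (dirac_l (dirac_r f)) x" by (rule dr_loc[OF opn C2 x])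
  also have "\<dots> = dirac_l (dirac_r (dirac_r f)) x" by (rule comm[OF opn drf2 x, symmetric])
  also have "\<dots> = 0" by (rule dl_zero[OF opn DR0 x])
  finally show "laplace (dirac_l f) x = 0" using DDr[OF opn dlf2 x] by simp
  show "dirac_r (laplace f) x = 0" by (rule dr_zero[OF opn L0 x])
  show "dirac_l (laplace f) x = 0" by (rule dl_zero[OF opn L0 x])
  show "laplace (laplace f) x = 0" by (rule lap_zero[OF opn L0 x])
  show "laplace f x = 0" using L0 x by blast
qed

lemma infra_vals:
  assumes I0: "\<forall>y\<in>\<Omega>. dirac_l (dirac_r f) y = 0" and x: "x \<in> \<Omega>"
  shows "dirac_l (dirac_r f) x = 0" "dirac_r (dirac_l f) x = 0"
    "dirac_l (dirac_l (dirac_l f)) x = 0" "dirac_r (dirac_r (dirac_r f)) x = 0"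
    "laplace (dirac_r f) x = 0" "laplace (dirac_l f) x = 0"
    "dirac_r (laplace f) x = 0" "dirac_l (laplace f) x = 0" "laplace (laplace f) x = 0"
    "dirac_l (dirac_l f) x = - laplace f x" "dirac_r (dirac_r f) x = - laplace f x"
proof -
  have Z1: "\<forall>y\<in>\<Omega>. dirac_r (dirac_l f) y = 0" using comm[OF opn f2] I0 by simp
  show "dirac_l (dirac_r f) x = 0" "dirac_r (dirac_l f) x = 0" using I0 Z1 x by auto
  show "dirac_l (dirac_l f) x = - laplace f x" by (rule DD[OF opn f2 x])
  show "dirac_r (dirac_r f) x = - laplace f x" by (rule DDr[OF opn f2 x])
  show "laplace (dirac_r f) x = 0" using DD[OF opn drf2 x] dl_zero[OF opn I0 x] by simp
  show "laplace (dirac_l f) x = 0" using DDr[OF opn dlf2 x] dr_zero[OF opn Z1 x] by simp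
  have LD: "\<forall>y\<in>\<Omega>. laplace f y = - dirac_l (dirac_l f) y" using DD[OF opn f2] by simp
  have "dirac_r (laplace f) x = dirac_r (\<lambda>y. - dirac_l (dirac_l f) y) x" by (rule dr_loc[OF opn LD x])
  also have "\<dots> = - dirac_r (dirac_l (dirac_l f)) x" by (rule dr_uminus[OF opn dldlf1 x])
  also have "dirac_r (dirac_l (dirac_l f)) x = dirac_l (dirac_r (dirac_l f)) x" by (rule comm[OF opn dlf2 x, symmetric])
  also have "\<dots> = 0" by (rule dl_zero[OF opn Z1 x])
  finally show "dirac_r (laplace f) x = 0" by (simp add: fun_eq_iff)
  have LR': "\<forall>y\<in>\<Omega>. laplace f y = - dirac_r (dirac_r f) y" using DDr[OF opn f2] by simp
  have DLL0: "\<forall>y\<in>\<Omega>. dirac_l (laplace f) y = 0"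
  proof
    fix y assume y: "y \<in> \<Omega>"
    have "dirac_l (laplace f) y = dirac_l (\<lambda>y. - dirac_r (dirac_r f) y) y" by (rule dl_loc[OF opn LR' y])
    also have "\<dots> = - dirac_l (dirac_r (dirac_r f)) y" by (rule dl_uminus[OF opn drdrf1 y])
    also have "dirac_l (dirac_r (dirac_r f)) y = dirac_r (dirac_l (dirac_r f)) y" by (rule comm[OF opn drf2 y])
    also have "\<dots> = 0" by (rule dr_zero[OF opn I0 y])
    finally show "dirac_l (laplace f) y = 0" by (simp add: fun_eq_iff)
  qed
  show "dirac_l (laplace f) x = 0" using DLL0 x by blast
  show "laplace (laplace f) x = 0" using DD[OF opn lapf2 x] dl_zero[OF opn DLL0 x] by simp
  have E: "\<forall>y\<in>\<Omega>. dirac_l (dirac_l f) y = dirac_r (dirac_r f) y" using DD[OF opn f2] DDr[OF opn f2] by simp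
  have "dirac_l (dirac_l (dirac_l f)) x = dirac_l (dirac_r (dirac_r f)) x" by (rule dl_loc[OF opn E x])
  also have "\<dots> = dirac_r (dirac_l (dirac_r f)) x" by (rule comm[OF opn drf2 x])
  also have "\<dots> = 0" by (rule dr_zero[OF opn I0 x])
  finally show "dirac_l (dirac_l (dirac_l f)) x = 0" .
  have E': "\<forall>y\<in>\<Omega>. dirac_r (dirac_r f) y = dirac_l (dirac_l f) y" using E by simp
  have "dirac_r (dirac_r (dirac_r f)) x = dirac_r (dirac_l (dirac_l f)) x" by (rule dr_loc[OF opn E' x])
  also have "\<dots> = dirac_l (dirac_r (dirac_l f)) x" by (rule comm[OF opn dlf2 x, symmetric])
  also have "\<dots> = 0" by (rule dl_zero[OF opn Z1 x])
  finally show "dirac_r (dirac_r (dirac_r f)) x = 0" .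
qed

lemma infra_iff: "inframonogenic_on \<Omega> f \<longleftrightarrow> (\<forall>x\<in>\<Omega>. dirac_l (dirac_r f) x = 0)"
  unfolding inframonogenic_on_def using infra_eq[OF opn f2] by simp

lemma sc_m2_0: "sc (-2) a = 0 \<longleftrightarrow> a = 0" by (auto simp: fun_eq_iff)
lemma sc_8_0: "sc 2 (sc 2 a) + sc 2 (sc 2 a) = 0 \<longleftrightarrow> a = 0" by (auto simp: fun_eq_iff)
lemma sc_4_0: "sc 2 a + sc 2 a = 0 \<longleftrightarrow> a = 0" by (auto simp: fun_eq_iff)

lemma main_ctx:
  assumes odd: "odd CARD('n)"
  shows "(harmonic_on \<Omega> f \<longrightarrow>
            (inframonogenic_on \<Omega> f \<longleftrightarrow> (\<forall>x\<in>\<Omega>. dirac_l (dirac_l (dirac_l (\<lambda>y. f y \<odot> cl_vec y))) x = 0)) \<and>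
            (inframonogenic_on \<Omega> f \<longleftrightarrow> (\<forall>x\<in>\<Omega>. dirac_r (dirac_r (dirac_r (\<lambda>y. cl_vec y \<odot> f y))) x = 0)) \<and>
            (inframonogenic_on \<Omega> f \<longleftrightarrow> (\<forall>x\<in>\<Omega>. laplace (laplace (\<lambda>y. cl_vec y \<odot> f y \<odot> cl_vec y)) x = 0)))
       \<and> (inframonogenic_on \<Omega> f \<longrightarrow>
            (harmonic_on \<Omega> f \<longleftrightarrow> (\<forall>x\<in>\<Omega>. dirac_l (dirac_l (dirac_l (\<lambda>y. f y \<odot> cl_vec y))) x = 0)) \<and>
            (harmonic_on \<Omega> f \<longleftrightarrow> (\<forall>x\<in>\<Omega>. dirac_r (dirac_r (dirac_r (\<lambda>y. cl_vec y \<odot> f y))) x = 0)) \<and>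
            (harmonic_on \<Omega> f \<longleftrightarrow> (\<forall>x\<in>\<Omega>. laplace (laplace (\<lambda>y. cl_vec y \<odot> f y \<odot> cl_vec y)) x = 0)))"
proof (intro conjI impI)
  assume H: "harmonic_on \<Omega> f"
  hence L0: "\<forall>y\<in>\<Omega>. laplace f y = 0" by (simp add: harmonic_on_def)
  note hv = harm_vals[OF L0]
  have cm: "dirac_r (dirac_l f) x = dirac_l (dirac_r f) x" if "x \<in> \<Omega>" for x
    using comm[OF opn f2 that] by simp
  have e1: "dirac_l (dirac_l (dirac_l (\<lambda>y. f y \<odot> cl_vec y))) x = sc (-2) (dirac_l (dirac_r f) x)"
    if x: "x \<in> \<Omega>" for x
    by (simp add: c1_formula[OF x] hv[OF x])
  have e2: "dirac_r (dirac_r (dirac_r (\<lambda>y. cl_vec y \<odot> f y))) x = sc (-2) (dirac_l (dirac_r f) x)"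
    if x: "x \<in> \<Omega>" for x
    by (simp add: c2_formula[OF x] hv[OF x] cm[OF x])
  have e3: "laplace (laplace (\<lambda>y. cl_vec y \<odot> f y \<odot> cl_vec y)) x
       = sc 2 (sc 2 (dirac_l (dirac_r f) x)) + sc 2 (sc 2 (dirac_l (dirac_r f) x))"
    if x: "x \<in> \<Omega>" for x
    by (simp add: c3_formula[OF x] hv[OF x] cm[OF x])
  show "inframonogenic_on \<Omega> f \<longleftrightarrow> (\<forall>x\<in>\<Omega>. dirac_l (dirac_l (dirac_l (\<lambda>y. f y \<odot> cl_vec y))) x = 0)"
    unfolding infra_iff using e1 by (simp add: sc_m2_0)
  show "inframonogenic_on \<Omega> f \<longleftrightarrow> (\<forall>x\<in>\<Omega>. dirac_r (dirac_r (dirac_r (\<lambda>y. cl_vec y \<odot> f y))) x = 0)"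
    unfolding infra_iff using e2 by (simp add: sc_m2_0)
  have e3': "laplace (laplace (\<lambda>y. cl_vec y \<odot> f y \<odot> cl_vec y)) x = 0 \<longleftrightarrow> dirac_l (dirac_r f) x = 0"
    if x: "x \<in> \<Omega>" for x
    by (subst e3[OF x]) (rule sc_8_0)
  show "inframonogenic_on \<Omega> f \<longleftrightarrow> (\<forall>x\<in>\<Omega>. laplace (laplace (\<lambda>y. cl_vec y \<odot> f y \<odot> cl_vec y)) x = 0)"
    unfolding infra_iff using e3' by blast
next
  assume I: "inframonogenic_on \<Omega> f"
  hence I0: "\<forall>y\<in>\<Omega>. dirac_l (dirac_r f) y = 0" by (simp add: infra_iff)
  note iv = infra_vals[OF I0]
  have T0: "Tm a = 0 \<longleftrightarrow> a = 0" for a :: "'n clifford" by (rule T_zero_iff[OF odd])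
  have e1: "dirac_l (dirac_l (dirac_l (\<lambda>y. f y \<odot> cl_vec y))) x = - Tm (laplace f x)"
    if x: "x \<in> \<Omega>" for x
    by (simp add: c1_formula[OF x] iv[OF x] Tm_uminus)
  have e2: "dirac_r (dirac_r (dirac_r (\<lambda>y. cl_vec y \<odot> f y))) x = - Tm (laplace f x)"
    if x: "x \<in> \<Omega>" for x
    by (simp add: c2_formula[OF x] iv[OF x] Tm_uminus)
  have e3: "laplace (laplace (\<lambda>y. cl_vec y \<odot> f y \<odot> cl_vec y)) x
       = sc 2 (Tm (laplace f x)) + sc 2 (Tm (laplace f x))"
    if x: "x \<in> \<Omega>" for x
    by (simp add: c3_formula[OF x] iv[OF x])
  show "harmonic_on \<Omega> f \<longleftrightarrow> (\<forall>x\<in>\<Omega>. dirac_l (dirac_l (dirac_l (\<lambda>y. f y \<odot> cl_vec y))) x = 0)"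
    unfolding harmonic_on_def using e1 T0 by simp
  show "harmonic_on \<Omega> f \<longleftrightarrow> (\<forall>x\<in>\<Omega>. dirac_r (dirac_r (dirac_r (\<lambda>y. cl_vec y \<odot> f y))) x = 0)"
    unfolding harmonic_on_def using e2 T0 by simp
  have e3': "laplace (laplace (\<lambda>y. cl_vec y \<odot> f y \<odot> cl_vec y)) x = 0 \<longleftrightarrow> laplace f x = 0"
    if x: "x \<in> \<Omega>" for x
    by (subst e3[OF x], subst sc_4_0) (rule T0)
  show "harmonic_on \<Omega> f \<longleftrightarrow> (\<forall>x\<in>\<Omega>. laplace (laplace (\<lambda>y. cl_vec y \<odot> f y \<odot> cl_vec y)) x = 0)"
    unfolding harmonic_on_def using e3' by blast
qed

end

theorem mainTheorem11:
  fixes f :: "real ^ 'n::{finite,linorder} \<Rightarrow> 'n::{finite,linorder} clifford"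
    and \<Omega> :: "(real ^ 'n::{finite,linorder}) set"
  assumes "odd (card (UNIV :: 'n::{finite,linorder} set))"
    and "open \<Omega>"
    and "Ck 4 \<Omega> f"
  defines "c1 \<equiv> (\<forall>x\<in>\<Omega>. dirac_l (dirac_l (dirac_l (\<lambda>y. f y \<odot> cl_vec y))) x = 0)"
    and "c2 \<equiv> (\<forall>x\<in>\<Omega>. dirac_r (dirac_r (dirac_r (\<lambda>y. cl_vec y \<odot> f y))) x = 0)"
    and "c3 \<equiv> (\<forall>x\<in>\<Omega>. laplace (laplace (\<lambda>y. cl_vec y \<odot> f y \<odot> cl_vec y)) x = 0)"
  shows "(harmonic_on \<Omega> f \<longrightarrow>
            (inframonogenic_on \<Omega> f \<longleftrightarrow> c1) \<and>
            (inframonogenic_on \<Omega> f \<longleftrightarrow> c2) \<and>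
            (inframonogenic_on \<Omega> f \<longleftrightarrow> c3))
       \<and> (inframonogenic_on \<Omega> f \<longrightarrow>
            (harmonic_on \<Omega> f \<longleftrightarrow> c1) \<and>
            (harmonic_on \<Omega> f \<longleftrightarrow> c2) \<and>
            (harmonic_on \<Omega> f \<longleftrightarrow> c3))"
  unfolding c1_def c2_def c3_def
  by (rule main_ctx[OF assms(2) assms(3) assms(1)])

end
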